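(* We have \[ \mathrm{Ass}^{\mathrm{TKK}}(L(2)\otimes B)=k\oplus L(2)\otimes B\oplus\bigoplus_{p\ge 2}\mathrm{Mat}_2(B^{\otimes p}) \] where the product is given by simultaneously performing the matrix product and the concatenation of tensors.
   Context: We work over a field $k$ of characteristic zero. For $n\ge 0$, $L(n)$ denotes the irreducible $\mathfrak{sl}_2$-module of highest weight $n$; $L(2)\cong\mathfrak{sl}_2$ is the adjoint module, identified with traceless $2\times 2$ matrices via the standard embedding, so that $\mathrm{Mat}_2\cong L(0)\oplus L(2)$ as $\mathfrak{sl}_2$-modules ($\mathrm{Mat}_2$ denotes $2\times 2$ matrices). The category $\mathrm{TKK}$ has as objects the completely reducible $\mathfrak{sl}_2$-modules that are direct sums of copies of $L(0)$ and $L(2)$, and as morphisms $\mathfrak{sl}_2$-module maps. For a vector space $B$, $\mathrm{Ass}^{\mathrm{TKK}}(L(2)\otimes B)$ is the free unital associative algebra in $\mathrm{TKK}$ generated by $L(2)\otimes B$, i.e. the quotient of the tensor algebra $T(L(2)\otimes B)$ by the ideal generated by all $\mathfrak{sl}_2$-isotypic components $L(m)$ with $m\ne 0,2$. *)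

theory Defs
  imports "HOL-Analysis.Analysis"
begin

text \<open>Basis of sl2 = L(2): e, h, f (traceless 2x2 matrices).\<close>
datatype sl2b = E | H | F

definition mat_of :: "sl2b \<Rightarrow> 'k::comm_ring_1^2^2" where
  "mat_of X = (case X of
      E \<Rightarrow> (\<chi> i j. if i = 0 \<and> j = 1 then 1 else 0)
    | H \<Rightarrow> (\<chi> i j. if i = j then (if i = 0 then 1 else -1) else 0)
    | F \<Rightarrow> (\<chi> i j. if i = 1 \<and> j = 0 then 1 else 0))"

text \<open>coef X a a' = coefficient of a' in [X, a] (adjoint action).\<close>
fun coef :: "sl2b \<Rightarrow> sl2b \<Rightarrow> sl2b \<Rightarrow> 'k::comm_ring_1" where
  "coef E H E = -2"
| "coef E F H = 1"
| "coef H E E = 2"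
| "coef H F F = -2"
| "coef F E H = -1"
| "coef F H F = 2"
| "coef _ _ _ = 0"

text \<open>B is the free k-vector space on the basis type 'b. The tensor algebra
T(L(2) \<otimes> B) is modelled as finitely supported functions on words over the
basis {e,h,f} \<times> 'b of L(2) \<otimes> B; the product is concatenation (convolution).\<close>

definition finsupp :: "('a list \<Rightarrow> 'k::zero) \<Rightarrow> bool" where
  "finsupp f \<longleftrightarrow> finite {w. f w \<noteq> 0}"

definition tmul :: "('a list \<Rightarrow> 'k::comm_ring_1) \<Rightarrow> ('a list \<Rightarrow> 'k) \<Rightarrow> 'a list \<Rightarrow> 'k" where
  "tmul f g w = (\<Sum>i\<le>length w. f (take i w) * g (drop i w))"

definition tone :: "'a list \<Rightarrow> 'k::comm_ring_1" where
  "tone w = (if w = [] then 1 else 0)"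

text \<open>The sl2-action on T(L(2) \<otimes> B): adjoint on L(2), trivial on B, extended
as a derivation.\<close>
definition act :: "sl2b \<Rightarrow> ((sl2b \<times> 'b) list \<Rightarrow> 'k::comm_ring_1) \<Rightarrow> (sl2b \<times> 'b) list \<Rightarrow> 'k" where
  "act X \<phi> w = (\<Sum>i<length w. \<Sum>a\<in>{E, H, F}.
      coef X a (fst (w ! i)) * \<phi> (w[i := (a, snd (w ! i))]))"

text \<open>Highest weight vectors of weight m.\<close>
definition hwv :: "nat \<Rightarrow> ((sl2b \<times> 'b) list \<Rightarrow> 'k::comm_ring_1) \<Rightarrow> bool" where
  "hwv m \<phi> \<longleftrightarrow> finsupp \<phi> \<and> act E \<phi> = (\<lambda>_. 0) \<and> act H \<phi> = (\<lambda>w. of_nat m * \<phi> w)"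

text \<open>Union of the isotypic components L(m), m \<noteq> 0,2: spanned by f^i v for
highest weight vectors v of weight m.\<close>
definition bad_components :: "((sl2b \<times> 'b) list \<Rightarrow> 'k::comm_ring_1) set" where
  "bad_components = {(act F ^^ i) \<phi> | i \<phi> m. m \<noteq> 0 \<and> m \<noteq> 2 \<and> hwv m \<phi>}"

text \<open>Two-sided ideal generated by a set G.\<close>
inductive_set ideal_gen :: "('a list \<Rightarrow> 'k::comm_ring_1) set \<Rightarrow> ('a list \<Rightarrow> 'k) set"
  for G where
  zero: "(\<lambda>_. 0) \<in> ideal_gen G"
| gen: "finsupp a \<Longrightarrow> finsupp b \<Longrightarrow> g \<in> G \<Longrightarrow> tmul (tmul a g) b \<in> ideal_gen G"
| add: "x \<in> ideal_gen G \<Longrightarrow> y \<in> ideal_gen G \<Longrightarrow> (\<lambda>w. x w + y w) \<in> ideal_gen G"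

text \<open>Mat_2(T(B)) = \<Oplus>_p Mat_2(B^{\<otimes>p}): finitely supported functions from
words over 'b to 2x2 matrices; product = matrix product + concatenation.\<close>
definition mmul :: "('b list \<Rightarrow> 'k::comm_ring_1^2^2) \<Rightarrow> ('b list \<Rightarrow> 'k^2^2) \<Rightarrow> 'b list \<Rightarrow> 'k^2^2" where
  "mmul M N \<beta> = (\<Sum>i\<le>length \<beta>. M (take i \<beta>) ** N (drop i \<beta>))"

definition mone :: "'b list \<Rightarrow> 'k::comm_ring_1^2^2" where
  "mone \<beta> = (if \<beta> = [] then mat 1 else 0)"

text \<open>sl2 acts on Mat_2 by conjugation (commutator).\<close>
definition bracket :: "sl2b \<Rightarrow> 'k::comm_ring_1^2^2 \<Rightarrow> 'k^2^2" where
  "bracket X M = mat_of X ** M - M ** mat_of X"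

text \<open>The subalgebra k \<oplus> L(2)\<otimes>B \<oplus> \<Oplus>_{p\<ge>2} Mat_2(B^{\<otimes>p}).\<close>
definition TKK_alg :: "('b list \<Rightarrow> 'k::comm_ring_1^2^2) set" where
  "TKK_alg = {M. finite {\<beta>. M \<beta> \<noteq> 0} \<and> (\<exists>c. M [] = mat c)
      \<and> (\<forall>\<beta>. length \<beta> = 1 \<longrightarrow> M \<beta> $ 0 $ 0 + M \<beta> $ 1 $ 1 = 0)}"

text \<open>The natural algebra map T(L(2)\<otimes>B) \<rightarrow> Mat_2(T(B)),
(x_1\<otimes>b_1)...(x_n\<otimes>b_n) \<mapsto> (x_1 \<cdots> x_n) \<otimes> (b_1\<otimes>...\<otimes>b_n).\<close>
definition Phi :: "((sl2b \<times> 'b) list \<Rightarrow> 'k::comm_ring_1) \<Rightarrow> 'b list \<Rightarrow> 'k^2^2" where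
  "Phi \<phi> \<beta> = (\<Sum>as\<in>{as. length as = length \<beta>}.
      (\<chi> i j. \<phi> (zip as \<beta>) * (foldr (**) (map mat_of as) (mat 1)) $ i $ j))"

end

theory Submission
  imports Defs
begin

(* ---- A.thy ---- *)


definition dl :: "'a list \<Rightarrow> 'a list \<Rightarrow> 'k::comm_ring_1" where
  "dl u w = (if w = u then 1 else 0)"

lemma bij_splits: "bij_betw (\<lambda>i. (take i w, drop i w)) {..length w} {p. fst p @ snd p = w}"
proof (rule bij_betwI[where g="\<lambda>p. length (fst p)"])
  show "(\<lambda>p. length (fst p)) \<in> {p. fst p @ snd p = w} \<rightarrow> {..length w}" by auto
next
  fix p assume "p \<in> {p. fst p @ snd p = w}"
  then show "(take (length (fst p)) w, drop (length (fst p)) w) = p" by (cases p) auto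
qed auto

lemma finite_splits: "finite {p. fst p @ snd p = (w::'a list)}"
  using bij_betw_finite[OF bij_splits[of w]] by simp

lemma tmul_splits: "tmul f g w = (\<Sum>p\<in>{p. fst p @ snd p = w}. f (fst p) * g (snd p))"
  unfolding tmul_def by (simp add: sum.reindex_bij_betw[OF bij_splits, symmetric])


lemma tmul_triple_l:
  "tmul (tmul f g) h w = (\<Sum>t\<in>{t. fst t @ fst (snd t) @ snd (snd t) = w}. f (fst t) * g (fst (snd t)) * h (snd (snd t)))"
proof -
  have "tmul (tmul f g) h w = (\<Sum>p\<in>{p. fst p @ snd p = w}. \<Sum>q\<in>{q. fst q @ snd q = fst p}. f (fst q) * g (snd q) * h (snd p))"
    by (simp add: tmul_splits sum_distrib_right)
  also have "\<dots> = (\<Sum>(p,q)\<in>(SIGMA p:{p. fst p @ snd p = w}. {q. fst q @ snd q = fst p}). f (fst q) * g (snd q) * h (snd p))"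
    by (rule sum.Sigma) (auto simp: finite_splits)
  also have "\<dots> = (\<Sum>t\<in>{t. fst t @ fst (snd t) @ snd (snd t) = w}. f (fst t) * g (fst (snd t)) * h (snd (snd t)))"
    by (rule sum.reindex_bij_witness[where i="\<lambda>t. ((fst t @ fst (snd t), snd (snd t)), (fst t, fst (snd t)))"
          and j="\<lambda>pq. (fst (snd pq), snd (snd pq), snd (fst pq))"]) auto
  finally show ?thesis .
qed

lemma tmul_triple_r:
  "tmul f (tmul g h) w = (\<Sum>t\<in>{t. fst t @ fst (snd t) @ snd (snd t) = w}. f (fst t) * g (fst (snd t)) * h (snd (snd t)))"
proof -
  have "tmul f (tmul g h) w = (\<Sum>p\<in>{p. fst p @ snd p = w}. \<Sum>q\<in>{q. fst q @ snd q = snd p}. f (fst p) * g (fst q) * h (snd q))"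
    by (simp add: tmul_splits sum_distrib_left mult.assoc)
  also have "\<dots> = (\<Sum>(p,q)\<in>(SIGMA p:{p. fst p @ snd p = w}. {q. fst q @ snd q = snd p}). f (fst p) * g (fst q) * h (snd q))"
    by (rule sum.Sigma) (auto simp: finite_splits)
  also have "\<dots> = (\<Sum>t\<in>{t. fst t @ fst (snd t) @ snd (snd t) = w}. f (fst t) * g (fst (snd t)) * h (snd (snd t)))"
    by (rule sum.reindex_bij_witness[where i="\<lambda>t. ((fst t, fst (snd t) @ snd (snd t)), (fst (snd t), snd (snd t)))"
          and j="\<lambda>pq. (fst (fst pq), fst (snd pq), snd (snd pq))"]) auto
  finally show ?thesis .
qed

lemma tmul_assoc: "tmul (tmul f g) h = tmul f (tmul g h)"
  by (rule ext) (simp add: tmul_triple_l tmul_triple_r)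

lemma tmul_add_l: "tmul (\<lambda>w. f w + g w) h = (\<lambda>w. tmul f h w + tmul g h w)"
  by (rule ext) (simp add: tmul_def distrib_right sum.distrib)
lemma tmul_add_r: "tmul h (\<lambda>w. f w + g w) = (\<lambda>w. tmul h f w + tmul h g w)"
  by (rule ext) (simp add: tmul_def distrib_left sum.distrib)
lemma tmul_smult_l: "tmul (\<lambda>w. c * f w) h = (\<lambda>w. c * tmul f h w)"
  by (rule ext) (simp add: tmul_def sum_distrib_left mult.assoc)
lemma tmul_smult_r: "tmul h (\<lambda>w. c * f w) = (\<lambda>w. c * tmul h f w)"
  by (rule ext) (simp add: tmul_def sum_distrib_left mult.left_commute)
lemma tmul_zero_l: "tmul (\<lambda>w. 0) h = (\<lambda>w. 0)"
  by (rule ext) (simp add: tmul_def)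
lemma tmul_zero_r: "tmul h (\<lambda>w. 0) = (\<lambda>w. 0)"
  by (rule ext) (simp add: tmul_def)

lemma tmul_dl_l: "tmul (dl u) f w = (if take (length u) w = u then f (drop (length u) w) else 0)"
proof -
  have "tmul (dl u) f w = (\<Sum>i\<le>length w. if i = length u \<and> take (length u) w = u then f (drop (length u) w) else 0)"
    unfolding tmul_def dl_def
    by (rule sum.cong) (auto intro: sum.cong)
  also have "\<dots> = (if take (length u) w = u then f (drop (length u) w) else 0)"
  proof (cases "take (length u) w = u")
    case True
    then have "w = u @ drop (length u) w" by (metis append_take_drop_id)
    then have "length u \<le> length w" by (metis le_add1 length_append)
    then show ?thesis using True by (simp add: sum.delta' )
  qed simp
  finally show ?thesis .
qed

lemma tmul_dl_r: "tmul f (dl v) w = (if drop (length w - length v) w = v then f (take (length w - length v) w) else 0)"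
proof -
  have "tmul f (dl v) w = (\<Sum>i\<le>length w. if i = length w - length v \<and> drop (length w - length v) w = v then f (take (length w - length v) w) else 0)"
    unfolding tmul_def dl_def
    by (rule sum.cong) auto
  also have "\<dots> = (if drop (length w - length v) w = v then f (take (length w - length v) w) else 0)"
    by (simp add: sum.delta')
  finally show ?thesis .
qed

lemma tmul_dl_dl: "tmul (dl u) (dl v) = dl (u @ v)"
  by (rule ext) (auto simp: tmul_dl_l dl_def, metis append_take_drop_id)

lemma tone_dl: "tone = dl []"
  by (rule ext) (simp add: tone_def dl_def)

lemma tmul_tone_l: "tmul tone f = f"
  by (rule ext) (simp add: tone_dl tmul_dl_l)
lemma tmul_tone_r: "tmul f tone = f"
  by (rule ext) (simp add: tone_dl tmul_dl_r)

lemma finsupp_zero[simp]: "finsupp (\<lambda>w. 0)"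
  by (simp add: finsupp_def)
lemma finsupp_dl[simp]: "finsupp (dl u)"
  unfolding finsupp_def dl_def by (rule finite_subset[of _ "{u}"]) auto
lemma finsupp_tone[simp]: "finsupp tone"
  by (simp add: tone_dl)
lemma finsupp_add: "finsupp (f::'a list \<Rightarrow> 'k::comm_ring_1) \<Longrightarrow> finsupp g \<Longrightarrow> finsupp (\<lambda>w. f w + g w)"
  unfolding finsupp_def by (rule finite_subset[of _ "{w. f w \<noteq> 0} \<union> {w. g w \<noteq> 0}"]) auto
lemma finsupp_smult: "finsupp (f::'a list \<Rightarrow> 'k::comm_ring_1) \<Longrightarrow> finsupp (\<lambda>w. c * f w)"
  unfolding finsupp_def by (rule finite_subset[of _ "{w. f w \<noteq> 0}"]) auto
lemma finsupp_uminus: "finsupp (f::'a list \<Rightarrow> 'k::comm_ring_1) \<Longrightarrow> finsupp (\<lambda>w. - f w)"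
  using finsupp_smult[of f "-1"] by simp
lemma finsupp_diff: "finsupp (f::'a list \<Rightarrow> 'k::comm_ring_1) \<Longrightarrow> finsupp g \<Longrightarrow> finsupp (\<lambda>w. f w - g w)"
  using finsupp_add[OF _ finsupp_uminus, of f g] by simp
lemma finsupp_sum: "finite S \<Longrightarrow> (\<And>i. i \<in> S \<Longrightarrow> finsupp (f i :: 'a list \<Rightarrow> 'k::comm_ring_1)) \<Longrightarrow> finsupp (\<lambda>w. \<Sum>i\<in>S. f i w)"
proof (induction S rule: finite_induct)
  case (insert x F)
  then show ?case using finsupp_add[of "f x" "\<lambda>w. \<Sum>i\<in>F. f i w"] by simp
qed simp

lemma finsupp_tmul: assumes "finsupp f" "finsupp g" shows "finsupp (tmul f g)"
proof -
  have "{w. tmul f g w \<noteq> 0} \<subseteq> (\<lambda>p. fst p @ snd p) ` ({w. f w \<noteq> 0} \<times> {w. g w \<noteq> 0})"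
  proof
    fix w assume "w \<in> {w. tmul f g w \<noteq> 0}"
    then have "(\<Sum>i\<le>length w. f (take i w) * g (drop i w)) \<noteq> 0" unfolding tmul_def by simp
    then obtain i where "f (take i w) * g (drop i w) \<noteq> 0"
      using sum.not_neutral_contains_not_neutral by blast
    then show "w \<in> (\<lambda>p. fst p @ snd p) ` ({w. f w \<noteq> 0} \<times> {w. g w \<noteq> 0})"
      by (intro image_eqI[of _ _ "(take i w, drop i w)"]) auto
  qed
  moreover have "finite ((\<lambda>p. fst p @ snd p) ` ({w. f w \<noteq> 0} \<times> {w. g w \<noteq> 0}))"
    using assms unfolding finsupp_def by (intro finite_imageI finite_cartesian_product)
  ultimately show ?thesis unfolding finsupp_def by (rule finite_subset)
qed

lemma span_dl_aux:
  assumes zero: "(\<lambda>w. 0) \<in> J"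
    and add: "\<And>x y. x \<in> J \<Longrightarrow> y \<in> J \<Longrightarrow> (\<lambda>w. x w + y w) \<in> J"
    and smult: "\<And>c u. P u \<Longrightarrow> (\<lambda>w. c * dl u w) \<in> J"
  shows "finite S \<Longrightarrow> (\<forall>u\<in>S. P u) \<Longrightarrow> (\<lambda>w. \<Sum>u\<in>S. (f u :: 'k::comm_ring_1) * dl u w) \<in> J"
proof (induction S rule: finite_induct)
  case empty then show ?case using zero by simp
next
  case (insert x F)
  have "(\<lambda>w. f x * dl x w + (\<Sum>u\<in>F. f u * dl u w)) \<in> J"
    using insert by (intro add smult) auto
  moreover have "(\<lambda>w. \<Sum>u\<in>insert x F. f u * dl u w) = (\<lambda>w. f x * dl x w + (\<Sum>u\<in>F. f u * dl u w))"
    using insert(1,2) by (intro ext sum.insert)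
  ultimately show ?case by simp
qed

lemma dl_expand:
  assumes "finsupp (f :: 'a list \<Rightarrow> 'k::comm_ring_1)"
  shows "f = (\<lambda>w. \<Sum>u\<in>{w. f w \<noteq> 0}. f u * dl u w)"
proof
  fix w
  have "(\<Sum>u\<in>{w. f w \<noteq> 0}. f u * dl u w) = (\<Sum>u\<in>{w. f w \<noteq> 0}. if w = u then f u else 0)"
    by (rule sum.cong) (auto simp: dl_def)
  also have "\<dots> = (if w \<in> {w. f w \<noteq> 0} then f w else 0)"
    using assms unfolding finsupp_def by (simp only: sum.delta')
  also have "\<dots> = f w" by simp
  finally show "f w = (\<Sum>u\<in>{w. f w \<noteq> 0}. f u * dl u w)" by simp
qed

lemma span_dl:
  assumes zero: "(\<lambda>w. 0) \<in> J"
    and add: "\<And>x y. x \<in> J \<Longrightarrow> y \<in> J \<Longrightarrow> (\<lambda>w. x w + y w) \<in> J"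
    and smult: "\<And>c u. P u \<Longrightarrow> (\<lambda>w. c * dl u w) \<in> J"
    and f: "finsupp (f :: 'a list \<Rightarrow> 'k::comm_ring_1)" "\<And>w. f w \<noteq> 0 \<Longrightarrow> P w"
  shows "f \<in> J"
proof -
  have "(\<lambda>w. \<Sum>u\<in>{w. f w \<noteq> 0}. f u * dl u w) \<in> J"
    using f by (intro span_dl_aux[OF zero add smult]) (auto simp: finsupp_def)
  then show ?thesis using dl_expand[OF f(1)] by simp
qed

lemma ideal_smult: "x \<in> ideal_gen G \<Longrightarrow> (\<lambda>w. c * x w) \<in> ideal_gen G"
proof (induction rule: ideal_gen.induct)
  case zero then show ?case by (simp add: ideal_gen.zero)
next
  case (gen a b g)
  have "(\<lambda>w. c * tmul (tmul a g) b w) = tmul (tmul (\<lambda>w. c * a w) g) b"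
    by (simp add: tmul_smult_l)
  then show ?case using gen finsupp_smult ideal_gen.gen by metis
next
  case (add x y)
  then show ?case using ideal_gen.add[OF add.IH] by (simp add: distrib_left)
qed

lemma ideal_uminus: "x \<in> ideal_gen G \<Longrightarrow> (\<lambda>w. - x w) \<in> ideal_gen G"
  using ideal_smult[of x G "-1"] by simp

lemma ideal_diff: "x \<in> ideal_gen G \<Longrightarrow> y \<in> ideal_gen G \<Longrightarrow> (\<lambda>w. x w - y w) \<in> ideal_gen G"
  using ideal_gen.add[OF _ ideal_uminus, of x G y] by simp

lemma ideal_sum: "finite S \<Longrightarrow> (\<And>i. i \<in> S \<Longrightarrow> f i \<in> ideal_gen G) \<Longrightarrow> (\<lambda>w. \<Sum>i\<in>S. f i w) \<in> ideal_gen G"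
proof (induction S rule: finite_induct)
  case empty then show ?case by (simp add: ideal_gen.zero)
next
  case (insert x F)
  then show ?case using ideal_gen.add[of "f x" G "\<lambda>w. \<Sum>i\<in>F. f i w"] by simp
qed

lemma ideal_lmul: "y \<in> ideal_gen G \<Longrightarrow> finsupp x \<Longrightarrow> tmul x y \<in> ideal_gen G"
proof (induction rule: ideal_gen.induct)
  case zero then show ?case by (simp add: tmul_zero_r ideal_gen.zero)
next
  case (gen a b g)
  have "tmul x (tmul (tmul a g) b) = tmul (tmul (tmul x a) g) b"
    by (simp add: tmul_assoc)
  then show ?case using gen finsupp_tmul ideal_gen.gen by metis
next
  case (add y z)
  then show ?case by (simp add: tmul_add_r ideal_gen.add)
qed

lemma ideal_rmul: "y \<in> ideal_gen G \<Longrightarrow> finsupp x \<Longrightarrow> tmul y x \<in> ideal_gen G"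
proof (induction rule: ideal_gen.induct)
  case zero then show ?case by (simp add: tmul_zero_l ideal_gen.zero)
next
  case (gen a b g)
  have "tmul (tmul (tmul a g) b) x = tmul (tmul a g) (tmul b x)"
    by (simp add: tmul_assoc)
  then show ?case using gen finsupp_tmul ideal_gen.gen by metis
next
  case (add y z)
  then show ?case by (simp add: tmul_add_l ideal_gen.add)
qed

lemma ideal_finsupp: "x \<in> ideal_gen G \<Longrightarrow> (\<And>g. g \<in> G \<Longrightarrow> finsupp g) \<Longrightarrow> finsupp x"
  by (induction rule: ideal_gen.induct) (auto intro: finsupp_tmul finsupp_add)

lemma ideal_gen_mem: "g \<in> G \<Longrightarrow> g \<in> ideal_gen G"
  using ideal_gen.gen[of tone tone g G] by (simp add: tmul_tone_l tmul_tone_r)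


(* ---- B.thy ---- *)


lemma UNIV_sl2b: "(UNIV :: sl2b set) = {E, H, F}" by (auto intro: sl2b.exhaust)

instance sl2b :: finite
  by standard (simp add: UNIV_sl2b)

lemma two_neq[simp]: "(0::2) \<noteq> 1" "(1::2) \<noteq> 0" by simp_all

lemma UNIV_2: "(UNIV :: 2 set) = {0, 1}"
proof -
  have "x = 0 \<or> x = 1" for x :: 2 using exhaust_2[of x] by auto
  then show ?thesis by auto
qed

lemma sum_2: "(\<Sum>k\<in>(UNIV::2 set). f k) = f 0 + f 1"
  by (simp add: UNIV_2)

lemma forall2: "(\<forall>i::2. P i) \<longleftrightarrow> P 0 \<and> P 1"
  by (metis (full_types) UNIV_2 UNIV_I empty_iff insert_iff)

lemma mat2_eq: "(A :: 'a^2^2) = B \<longleftrightarrow> A$0$0 = B$0$0 \<and> A$0$1 = B$0$1 \<and> A$1$0 = B$1$0 \<and> A$1$1 = B$1$1"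
  by (auto simp: vec_eq_iff forall2)

lemma mmult2: "((A :: 'a::semiring_1^2^2) ** B) $ i $ j = A$i$0 * B$0$j + A$i$1 * B$1$j"
  by (simp add: matrix_matrix_mult_def sum_2)

definition smat :: "'k::comm_ring_1 \<Rightarrow> 'k^2^2 \<Rightarrow> 'k^2^2" where
  "smat c M = (\<chi> i j. c * M$i$j)"

definition P :: "sl2b list \<Rightarrow> 'k::comm_ring_1^2^2" where
  "P as = foldr (**) (map mat_of as) (mat 1)"

lemma P_Nil[simp]: "P [] = mat 1" by (simp add: P_def)
lemma P_Cons[simp]: "P (x # as) = mat_of x ** P as" by (simp add: P_def)
lemma P_append: "P (a @ b) = P a ** P b"
  by (induction a) (simp_all add: matrix_mul_assoc)

lemma smat_nth[simp]: "smat c M $ i $ j = c * M $ i $ j" by (simp add: smat_def)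

lemma smat_mult_l: "smat c A ** B = smat c (A ** B)"
  by (simp add: vec_eq_iff matrix_matrix_mult_def sum_distrib_left mult.assoc)
lemma smat_mult_r: "A ** smat c B = smat c (A ** B)"
  by (simp add: vec_eq_iff matrix_matrix_mult_def sum_distrib_left mult.left_commute)
lemma smat_smat: "smat c (smat d A) = smat (c * d) A"
  by (simp add: vec_eq_iff mult.assoc)
lemma smat_sum_left: "smat (\<Sum>x\<in>S. f x) A = (\<Sum>x\<in>S. smat (f x) A)"
  by (simp add: vec_eq_iff sum_distrib_right)
lemma smat_zero[simp]: "smat 0 A = 0" by (simp add: vec_eq_iff)
lemma smat_one[simp]: "smat 1 A = A" by (simp add: vec_eq_iff)

lemma sum_mmult_left: "(sum f S) ** (B::'k::comm_ring_1^2^2) = (\<Sum>x\<in>S. f x ** B)"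
  by (simp add: vec_eq_iff matrix_matrix_mult_def sum_distrib_right sum_distrib_left) (intro allI sum.swap)
lemma sum_mmult_right: "(B::'k::comm_ring_1^2^2) ** (sum f S) = (\<Sum>x\<in>S. B ** f x)"
  by (simp add: vec_eq_iff matrix_matrix_mult_def sum_distrib_right sum_distrib_left) (intro allI sum.swap)

lemma finite_A[simp]: "finite {as :: sl2b list. length as = n}"
  using finite_lists_length_eq[of "UNIV :: sl2b set" n] by simp

lemma Phi_alt: "Phi \<phi> \<beta> = (\<Sum>as\<in>{as. length as = length \<beta>}. smat (\<phi> (zip as \<beta>)) (P as))"
  by (simp add: Phi_def smat_def P_def)

lemma sum_split_lists:
  assumes "i \<le> n"
  shows "(\<Sum>as\<in>{as::sl2b list. length as = n}. h (take i as) (drop i as)) =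
         (\<Sum>a1\<in>{as::sl2b list. length as = i}. \<Sum>a2\<in>{as::sl2b list. length as = n - i}. h a1 a2)"
proof -
  have "(\<Sum>as\<in>{as::sl2b list. length as = n}. h (take i as) (drop i as)) =
        (\<Sum>p\<in>{as::sl2b list. length as = i} \<times> {as::sl2b list. length as = n - i}. h (fst p) (snd p))"
    using assms
    by (intro sum.reindex_bij_witness[where i="\<lambda>p. fst p @ snd p" and j="\<lambda>as. (take i as, drop i as)"])
       (auto simp: min_def)
  also have "\<dots> = (\<Sum>a1\<in>{as::sl2b list. length as = i}. \<Sum>a2\<in>{as::sl2b list. length as = n - i}. h a1 a2)"
    by (simp add: sum.cartesian_product split_def)
  finally show ?thesis .
qed

lemma Phi_tmul: "Phi (tmul \<phi> \<psi>) \<beta> = mmul (Phi \<phi>) (Phi \<psi>) \<beta>"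
proof -
  define n where "n = length \<beta>"
  define g where "g i a1 a2 = smat (\<phi> (zip a1 (take i \<beta>)) * \<psi> (zip a2 (drop i \<beta>))) (P a1 ** P a2)" for i a1 a2
  have "Phi (tmul \<phi> \<psi>) \<beta> = (\<Sum>as\<in>{as. length as = n}. \<Sum>i\<le>n. g i (take i as) (drop i as))"
    unfolding Phi_alt n_def g_def
    by (rule sum.cong) (auto simp: tmul_def smat_sum_left take_zip drop_zip P_append[symmetric])
  also have "\<dots> = (\<Sum>i\<le>n. \<Sum>as\<in>{as. length as = n}. g i (take i as) (drop i as))"
    by (rule sum.swap)
  also have "\<dots> = (\<Sum>i\<le>n. \<Sum>a1\<in>{as. length as = i}. \<Sum>a2\<in>{as. length as = n - i}. g i a1 a2)"
    by (rule sum.cong) (auto simp: sum_split_lists)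
  also have "\<dots> = mmul (Phi \<phi>) (Phi \<psi>) \<beta>"
    unfolding mmul_def n_def[symmetric]
  proof (rule sum.cong)
    fix i assume "i \<in> {..n}"
    then have i: "length (take i \<beta>) = i" "length (drop i \<beta>) = n - i" by (auto simp: n_def)
    have "Phi \<phi> (take i \<beta>) ** Phi \<psi> (drop i \<beta>) =
      (\<Sum>a1\<in>{as. length as = i}. \<Sum>a2\<in>{as. length as = n - i}.
          smat (\<phi> (zip a1 (take i \<beta>))) (P a1) ** smat (\<psi> (zip a2 (drop i \<beta>))) (P a2))"
      by (simp only: Phi_alt i sum_mmult_left sum_mmult_right) (rule sum.swap)
    also have "\<dots> = (\<Sum>a1\<in>{as. length as = i}. \<Sum>a2\<in>{as. length as = n - i}. g i a1 a2)"
      unfolding g_def by (simp only: smat_mult_l smat_mult_r smat_smat mult.commute)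
    finally show "(\<Sum>a1\<in>{as. length as = i}. \<Sum>a2\<in>{as. length as = n - i}. g i a1 a2) =
        Phi \<phi> (take i \<beta>) ** Phi \<psi> (drop i \<beta>)" by simp
  qed simp
  finally show ?thesis .
qed

lemma Phi_tone: "Phi tone = mone"
proof (rule ext)
  fix \<beta>
  show "Phi tone \<beta> = mone \<beta>"
  proof (cases "\<beta> = []")
    case True
    have "{as :: sl2b list. length as = 0} = {[]}" by auto
    then show ?thesis using True by (simp add: Phi_alt mone_def tone_def)
  next
    case False
    have "Phi tone \<beta> = (\<Sum>as\<in>{as. length as = length \<beta>}. smat 0 (P as))"
      unfolding Phi_alt using False by (intro sum.cong) (auto simp: tone_def)
    then show ?thesis using False by (simp add: mone_def)
  qed
qed


(* ---- C.thy ---- *)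


lemma mat_of_nth[simp]:
  "mat_of E $ 0 $ 0 = 0" "mat_of E $ 0 $ 1 = 1" "mat_of E $ 1 $ 0 = 0" "mat_of E $ 1 $ 1 = 0"
  "mat_of H $ 0 $ 0 = 1" "mat_of H $ 0 $ 1 = 0" "mat_of H $ 1 $ 0 = 0" "mat_of H $ 1 $ 1 = -1"
  "mat_of F $ 0 $ 0 = 0" "mat_of F $ 0 $ 1 = 0" "mat_of F $ 1 $ 0 = 1" "mat_of F $ 1 $ 1 = 0"
  by (simp_all add: mat_of_def)

lemma mat_nth2[simp]: "(mat c :: 'a::zero^2^2) $ 0 $ 0 = c" "(mat c :: 'a::zero^2^2) $ 0 $ 1 = 0"
   "(mat c :: 'a::zero^2^2) $ 1 $ 0 = 0" "(mat c :: 'a::zero^2^2) $ 1 $ 1 = c"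
  by (simp_all add: mat_def)

lemma sum_sl2b: "(\<Sum>a\<in>(UNIV::sl2b set). f a) = f E + f H + f F"
  by (simp add: UNIV_sl2b add.assoc)

lemma bracket_nth: "bracket X M $ i $ j = (mat_of X ** M) $ i $ j - (M ** mat_of X) $ i $ j"
  by (simp add: bracket_def)

lemma coef_bracket: "(\<Sum>a'\<in>UNIV. smat (coef X a a') (mat_of a')) = (bracket X (mat_of a) :: 'k::comm_ring_1^2^2)"
  by (cases X; cases a) (simp_all add: mat2_eq sum_sl2b bracket_nth mmult2)

lemma mmult_diff_l: "((A::'k::comm_ring_1^2^2) - B) ** C = A ** C - B ** C"
  by (simp add: vec_eq_iff matrix_matrix_mult_def sum_subtractf left_diff_distrib)
lemma mmult_diff_r: "(C::'k::comm_ring_1^2^2) ** (A - B) = C ** A - C ** B"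
  by (simp add: vec_eq_iff matrix_matrix_mult_def sum_subtractf right_diff_distrib)
lemma mmult_add_l: "((A::'k::comm_ring_1^2^2) + B) ** C = A ** C + B ** C"
  by (simp add: vec_eq_iff matrix_matrix_mult_def sum.distrib distrib_right)

lemma derivation:
  "(\<Sum>i<length as. \<Sum>a'\<in>UNIV. smat (coef X (as!i) a') (P (as[i:=a']))) = (bracket X (P as) :: 'k::comm_ring_1^2^2)"
proof (induction as)
  case Nil then show ?case by (simp add: bracket_def)
next
  case (Cons x as)
  have "(\<Sum>i<length (x#as). \<Sum>a'\<in>UNIV. smat (coef X ((x#as)!i) a') (P ((x#as)[i:=a']) :: 'k^2^2)) =
    (\<Sum>a'\<in>UNIV. smat (coef X x a') (P (a'#as))) +
    (\<Sum>i<length as. \<Sum>a'\<in>UNIV. smat (coef X (as!i) a') (P (x # as[i:=a'])))"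
    unfolding length_Cons sum.lessThan_Suc_shift by (simp del: P_Cons)
  also have "(\<Sum>a'\<in>UNIV. smat (coef X x a') (P (a'#as) :: 'k^2^2)) = bracket X (mat_of x) ** P as"
    by (simp add: smat_mult_l[symmetric] sum_mmult_left[symmetric] coef_bracket)
  also have "(\<Sum>i<length as. \<Sum>a'\<in>UNIV. smat (coef X (as!i) a') (P (x # as[i:=a']) :: 'k^2^2)) =
      mat_of x ** (\<Sum>i<length as. \<Sum>a'\<in>UNIV. smat (coef X (as!i) a') (P (as[i:=a'])))"
    by (simp add: smat_mult_r[symmetric] sum_mmult_right)
  also have "\<dots> = mat_of x ** bracket X (P as)" using Cons.IH by simp
  finally show ?case
    by (simp add: bracket_def mmult_diff_l mmult_diff_r matrix_mul_assoc)
qed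

lemma smat_sum_right: "smat c (sum f S) = (\<Sum>x\<in>S. smat c (f x))"
  by (simp add: vec_eq_iff sum_distrib_left)

lemma bracket_smat: "bracket X (smat c M) = smat c (bracket X M)"
  by (simp add: bracket_def smat_mult_l smat_mult_r vec_eq_iff right_diff_distrib)

lemma bracket_sum: "bracket X (sum f S) = (\<Sum>x\<in>S. bracket X (f x))"
  by (simp add: bracket_def sum_mmult_left sum_mmult_right sum_subtractf)

lemma Phi_act: "Phi (act X \<phi>) \<beta> = bracket X (Phi \<phi> \<beta>)"
proof -
  define n where "n = length \<beta>"
  define A where "A = {as :: sl2b list. length as = n}"
  have "Phi (act X \<phi>) \<beta> = (\<Sum>as\<in>A. \<Sum>i<n. \<Sum>a\<in>UNIV. smat (coef X a (as!i) * \<phi> (zip (as[i:=a]) \<beta>)) (P as))"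
    unfolding Phi_alt A_def n_def[symmetric]
  proof (rule sum.cong)
    fix as assume "as \<in> {as :: sl2b list. length as = n}"
    then have len: "length as = n" by simp
    have "act X \<phi> (zip as \<beta>) = (\<Sum>i<n. \<Sum>a\<in>UNIV. coef X a (as!i) * \<phi> (zip (as[i:=a]) \<beta>))"
      unfolding act_def UNIV_sl2b using len
      by (intro sum.cong) (auto simp: n_def zip_update[symmetric])
    then show "smat (act X \<phi> (zip as \<beta>)) (P as) = (\<Sum>i<n. \<Sum>a\<in>UNIV. smat (coef X a (as!i) * \<phi> (zip (as[i:=a]) \<beta>)) (P as))"
      by (simp add: smat_sum_left)
  qed simp
  also have "\<dots> = (\<Sum>i<n. \<Sum>as\<in>A. \<Sum>a\<in>UNIV. smat (coef X a (as!i) * \<phi> (zip (as[i:=a]) \<beta>)) (P as))"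
    by (rule sum.swap)
  also have "\<dots> = (\<Sum>i<n. \<Sum>bs\<in>A. \<Sum>b\<in>UNIV. smat (coef X (bs!i) b * \<phi> (zip bs \<beta>)) (P (bs[i:=b])))"
  proof (rule sum.cong)
    fix i assume "i \<in> {..<n}"
    then have i: "i < n" by simp
    have "(\<Sum>as\<in>A. \<Sum>a\<in>UNIV. smat (coef X a (as!i) * \<phi> (zip (as[i:=a]) \<beta>)) (P as)) =
       (\<Sum>p\<in>A \<times> UNIV. smat (coef X (snd p) (fst p!i) * \<phi> (zip ((fst p)[i:=snd p]) \<beta>)) (P (fst p)))"
      by (simp add: sum.cartesian_product split_def)
    also have "\<dots> = (\<Sum>p\<in>A \<times> UNIV. smat (coef X (fst p!i) (snd p) * \<phi> (zip (fst p) \<beta>)) (P ((fst p)[i:=snd p])))"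
      using i
      by (intro sum.reindex_bij_witness[where i="\<lambda>p. ((fst p)[i:=snd p], fst p ! i)" and j="\<lambda>p. ((fst p)[i:=snd p], fst p ! i)"])
         (auto simp: A_def)
    also have "\<dots> = (\<Sum>bs\<in>A. \<Sum>b\<in>UNIV. smat (coef X (bs!i) b * \<phi> (zip bs \<beta>)) (P (bs[i:=b])))"
      by (simp add: sum.cartesian_product split_def)
    finally show "(\<Sum>as\<in>A. \<Sum>a\<in>UNIV. smat (coef X a (as!i) * \<phi> (zip (as[i:=a]) \<beta>)) (P as)) =
       (\<Sum>bs\<in>A. \<Sum>b\<in>UNIV. smat (coef X (bs!i) b * \<phi> (zip bs \<beta>)) (P (bs[i:=b])))" .
  qed simp
  also have "\<dots> = (\<Sum>bs\<in>A. smat (\<phi> (zip bs \<beta>)) (\<Sum>i<n. \<Sum>b\<in>UNIV. smat (coef X (bs!i) b) (P (bs[i:=b]))))"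
    by (subst sum.swap) (simp add: smat_smat[symmetric] smat_sum_right mult.commute)
  also have "\<dots> = (\<Sum>bs\<in>A. smat (\<phi> (zip bs \<beta>)) (bracket X (P bs)))"
    by (rule sum.cong) (auto simp: A_def derivation)
  also have "\<dots> = bracket X (Phi \<phi> \<beta>)"
    by (simp add: Phi_alt bracket_sum bracket_smat A_def n_def)
  finally show ?thesis .
qed


(* ---- D.thy ---- *)


lemma Phi_add: "Phi (\<lambda>w. x w + y w) \<beta> = Phi x \<beta> + Phi y \<beta>"
  by (simp add: Phi_alt sum.distrib[symmetric] vec_eq_iff distrib_right)

lemma Phi_smult: "Phi (\<lambda>w. c * x w) \<beta> = smat c (Phi x \<beta>)"
  by (simp add: Phi_alt smat_sum_right smat_smat)

lemma Phi_zero: "Phi (\<lambda>w. 0) \<beta> = 0"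
  by (simp add: Phi_alt)

lemma Phi_tmul_fun: "Phi (tmul \<phi> \<psi>) = mmul (Phi \<phi>) (Phi \<psi>)"
  by (rule ext) (rule Phi_tmul)

lemma mmul_zero_l: "mmul (\<lambda>_. 0) M = (\<lambda>_. 0)"
  by (rule ext) (simp add: mmul_def)
lemma mmul_zero_r: "mmul M (\<lambda>_. 0) = (\<lambda>_. 0)"
  by (rule ext) (simp add: mmul_def)

lemma finsupp_act: assumes "finsupp \<phi>" shows "finsupp (act X \<phi>)"
proof -
  let ?S = "{w. \<phi> w \<noteq> 0}"
  let ?T = "\<Union>u\<in>?S. (\<lambda>p. u[fst p := (snd p, snd (u ! fst p))]) ` ({..<length u} \<times> UNIV)"
  have "{w. act X \<phi> w \<noteq> 0} \<subseteq> ?T"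
  proof
    fix w assume "w \<in> {w. act X \<phi> w \<noteq> 0}"
    then have "(\<Sum>i<length w. \<Sum>a\<in>{E, H, F}. coef X a (fst (w ! i)) * \<phi> (w[i := (a, snd (w ! i))])) \<noteq> 0"
      by (simp add: act_def)
    then obtain i where i: "i < length w" and
      "(\<Sum>a\<in>{E, H, F}. coef X a (fst (w ! i)) * \<phi> (w[i := (a, snd (w ! i))])) \<noteq> 0"
      using sum.not_neutral_contains_not_neutral by blast
    then obtain a where "coef X a (fst (w ! i)) * \<phi> (w[i := (a, snd (w ! i))]) \<noteq> 0"
      using sum.not_neutral_contains_not_neutral by blast
    then have u: "w[i := (a, snd (w ! i))] \<in> ?S" by auto
    let ?u = "w[i := (a, snd (w ! i))]"
    have "w = ?u[i := (fst (w ! i), snd (?u ! i))]" using i by simp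
    moreover have "(i, fst (w ! i)) \<in> {..<length ?u} \<times> UNIV" using i by simp
    ultimately have "w = (\<lambda>p. ?u[fst p := (snd p, snd (?u ! fst p))]) (i, fst (w ! i))"
       "(i, fst (w ! i)) \<in> {..<length ?u} \<times> UNIV" by simp_all
    then show "w \<in> ?T" by (intro UN_I[OF u] image_eqI)
  qed
  moreover have "finite ?T" using assms unfolding finsupp_def by auto
  ultimately show ?thesis unfolding finsupp_def by (rule finite_subset)
qed

lemma finsupp_act_pow: "finsupp \<phi> \<Longrightarrow> finsupp ((act X ^^ i) \<phi>)"
  by (induction i) (auto intro: finsupp_act)

lemma bracketH_nth:
  "bracket H M $ 0 $ 0 = 0" "bracket H M $ 0 $ 1 = 2 * M $ 0 $ 1"
  "bracket H M $ 1 $ 0 = - 2 * M $ 1 $ 0" "bracket H M $ 1 $ 1 = (0::'k::comm_ring_1)"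
  by (simp_all add: bracket_nth mmult2)

lemma hwv_Phi_zero:
  assumes "hwv m \<phi>" "m \<noteq> 0" "m \<noteq> 2"
  shows "Phi (\<phi> :: _ \<Rightarrow> 'k::field_char_0) \<beta> = 0"
proof -
  let ?M = "Phi \<phi> \<beta>"
  have "act H \<phi> = (\<lambda>w. of_nat m * \<phi> w)" using assms(1) by (simp add: hwv_def)
  then have eq: "bracket H ?M = smat (of_nat m) ?M"
    using Phi_act[of H \<phi> \<beta>] Phi_smult[of "of_nat m" \<phi> \<beta>] by simp
  have m0: "(of_nat m :: 'k) \<noteq> 0" using assms by simp
  have m2: "(of_nat m :: 'k) \<noteq> 2" using assms
    by (metis of_nat_eq_iff of_nat_numeral)
  have m3: "(of_nat m :: 'k) \<noteq> - 2"
  proof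
    assume "(of_nat m :: 'k) = - 2"
    then have "(of_nat (m + 2) :: 'k) = 0" by simp
    then have "m + 2 = 0" by (simp only: of_nat_eq_0_iff)
    then show False by simp
  qed
  have e00: "of_nat m * ?M $ 0 $ 0 = 0" using arg_cong[OF eq, of "\<lambda>M. M $ 0 $ 0"] by (simp add: bracketH_nth)
  have e11: "of_nat m * ?M $ 1 $ 1 = 0" using arg_cong[OF eq, of "\<lambda>M. M $ 1 $ 1"] by (simp add: bracketH_nth)
  have e01: "2 * ?M $ 0 $ 1 = of_nat m * ?M $ 0 $ 1" using arg_cong[OF eq, of "\<lambda>M. M $ 0 $ 1"] by (simp add: bracketH_nth)
  have e10: "- 2 * ?M $ 1 $ 0 = of_nat m * ?M $ 1 $ 0" using arg_cong[OF eq, of "\<lambda>M. M $ 1 $ 0"] by (simp add: bracketH_nth)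
  have "?M $ 0 $ 1 = 0"
  proof -
    have "(of_nat m - 2) * ?M $ 0 $ 1 = 0" using e01 by (simp add: algebra_simps)
    then show ?thesis using m2 by simp
  qed
  moreover have "?M $ 1 $ 0 = 0"
  proof -
    have "(of_nat m + 2) * ?M $ 1 $ 0 = of_nat m * ?M $ 1 $ 0 + 2 * ?M $ 1 $ 0" by (simp add: distrib_right)
    also have "\<dots> = - 2 * ?M $ 1 $ 0 + 2 * ?M $ 1 $ 0" by (simp only: e10)
    also have "\<dots> = 0" by (simp only: mult_minus_left left_minus)
    finally have "(of_nat m + 2) * ?M $ 1 $ 0 = 0" .
    moreover have "(of_nat m + 2 :: 'k) \<noteq> 0"
    proof -
      have "(of_nat (m + 2) :: 'k) \<noteq> 0" by (simp only: of_nat_eq_0_iff)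
      then show ?thesis by (simp add: add.commute)
    qed
    ultimately show ?thesis by simp
  qed
  ultimately show ?thesis using e00 e11 m0 by (simp add: mat2_eq)
qed

lemma bad_Phi_zero: "g \<in> bad_components \<Longrightarrow> Phi (g :: _ \<Rightarrow> 'k::field_char_0) = (\<lambda>_. 0)"
proof -
  assume "g \<in> bad_components"
  then obtain i \<phi> m where g: "g = (act F ^^ i) \<phi>" and h: "m \<noteq> 0" "m \<noteq> 2" "hwv m \<phi>"
    unfolding bad_components_def by blast
  have "Phi ((act F ^^ j) \<phi>) \<beta> = (0 :: 'k^2^2)" for j \<beta>
  proof (induction j arbitrary: \<beta>)
    case 0 then show ?case using hwv_Phi_zero[OF h(3,1,2)] by simp
  next
    case (Suc j) then show ?case by (simp add: Phi_act bracket_def)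
  qed
  then show ?thesis using g by auto
qed

lemma bad_finsupp: "g \<in> bad_components \<Longrightarrow> finsupp g"
  unfolding bad_components_def hwv_def by (auto intro: finsupp_act_pow)

lemma ideal_Phi_zero: "x \<in> ideal_gen bad_components \<Longrightarrow> Phi (x :: _ \<Rightarrow> 'k::field_char_0) = (\<lambda>_. 0)"
proof (induction rule: ideal_gen.induct)
  case zero then show ?case by (simp add: Phi_zero fun_eq_iff)
next
  case (gen a b g)
  have "Phi (tmul (tmul a g) b) = mmul (mmul (Phi a) (Phi g)) (Phi b)"
    by (simp add: Phi_tmul_fun)
  then show ?case using bad_Phi_zero[OF gen(3)] by (simp add: mmul_zero_l mmul_zero_r)
next
  case (add x y) then show ?case by (simp add: Phi_add fun_eq_iff)
qed


(* ---- NF.thy ---- *)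


definition NP :: "sl2b list set" where "NP = {[E,F],[F,E],[H,E],[H,F]}"

definition normal :: "sl2b list \<Rightarrow> bool" where
  "normal as \<longleftrightarrow> length as \<le> 1 \<or> (\<exists>p k. p \<in> NP \<and> as = p @ replicate k H)"

definition Dk :: "nat \<Rightarrow> 'k::comm_ring_1^2^2" where "Dk k = P (replicate k H)"

lemma Dk_nth[simp]: "Dk k $ 0 $ 0 = 1" "Dk k $ 0 $ 1 = 0" "Dk k $ 1 $ 0 = 0" "Dk k $ 1 $ 1 = (-1)^k"
  by (induction k) (simp_all add: Dk_def mmult2)

lemma P_normal: "P (p @ replicate k H) = P p ** Dk k"
  by (simp add: P_append Dk_def)

lemma sum_NP: "(\<Sum>p\<in>NP. f p) = f [E,F] + f [F,E] + f [H,E] + f [H,F]"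
  by (simp add: NP_def add.assoc)

lemma Phi_normal_ge2:
  assumes "\<And>w. \<phi> w \<noteq> 0 \<Longrightarrow> normal (map fst w)" "length \<beta> = k + 2"
  shows "Phi \<phi> \<beta> = (\<Sum>p\<in>NP. smat (\<phi> (zip (p @ replicate k H) \<beta>)) (P p ** Dk k))"
proof -
  let ?N = "(\<lambda>p. p @ replicate k H) ` NP"
  have NA: "?N \<subseteq> {as. length as = length \<beta>}" using assms(2) by (auto simp: NP_def)
  have "Phi \<phi> \<beta> = (\<Sum>as\<in>?N. smat (\<phi> (zip as \<beta>)) (P as))"
    unfolding Phi_alt
  proof (rule sum.mono_neutral_right[OF _ NA])
    show "\<forall>as\<in>{as. length as = length \<beta>} - ?N. smat (\<phi> (zip as \<beta>)) (P as) = 0"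
    proof
      fix as assume as: "as \<in> {as. length as = length \<beta>} - ?N"
      have "\<phi> (zip as \<beta>) = 0"
      proof (rule ccontr)
        assume "\<phi> (zip as \<beta>) \<noteq> 0"
        then have "normal as" using assms(1)[of "zip as \<beta>"] as by simp
        then obtain p k' where "p \<in> NP" "as = p @ replicate k' H" using as assms(2)
          unfolding normal_def by auto
        moreover then have "k' = k" using as assms(2) by (auto simp: NP_def)
        ultimately show False using as by auto
      qed
      then show "smat (\<phi> (zip as \<beta>)) (P as) = 0" by simp
    qed
  qed simp
  also have "\<dots> = (\<Sum>p\<in>NP. smat (\<phi> (zip (p @ replicate k H) \<beta>)) (P (p @ replicate k H)))"
    by (subst sum.reindex) (auto simp: inj_on_def)
  finally show ?thesis by (simp add: P_normal)
qed

lemma Phi_normal_ge2_nth: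
  assumes "\<And>w. \<phi> w \<noteq> 0 \<Longrightarrow> normal (map fst w)" "length \<beta> = k + 2"
  shows "Phi \<phi> \<beta> $ 0 $ 0 = \<phi> (zip ([E,F] @ replicate k H) \<beta>)"
    "Phi \<phi> \<beta> $ 1 $ 1 = (-1)^k * \<phi> (zip ([F,E] @ replicate k H) \<beta>)"
    "Phi \<phi> \<beta> $ 0 $ 1 = (-1)^k * \<phi> (zip ([H,E] @ replicate k H) \<beta>)"
    "Phi \<phi> \<beta> $ 1 $ 0 = - \<phi> (zip ([H,F] @ replicate k H) \<beta>)"
  using assms by (simp_all add: Phi_normal_ge2 sum_NP mmult2 mult.commute)

lemma Phi_len1: "Phi \<phi> [b] = (\<Sum>a\<in>UNIV. smat (\<phi> [(a, b)]) (mat_of a))"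
proof -
  have "{as :: sl2b list. length as = length [b]} = (\<lambda>a. [a]) ` UNIV"
    by (auto simp: length_Suc_conv)
  then have "Phi \<phi> [b] = (\<Sum>as\<in>(\<lambda>a. [a]) ` UNIV. smat (\<phi> (zip as [b])) (P as))"
    by (simp add: Phi_alt)
  also have "\<dots> = (\<Sum>a\<in>UNIV. smat (\<phi> [(a, b)]) (mat_of a))"
    by (subst sum.reindex) (auto simp: inj_on_def)
  finally show ?thesis .
qed

lemma Phi_len1_nth:
  "Phi \<phi> [b] $ 0 $ 0 = \<phi> [(H, b)]" "Phi \<phi> [b] $ 1 $ 1 = - \<phi> [(H, b)]"
  "Phi \<phi> [b] $ 0 $ 1 = \<phi> [(E, b)]" "Phi \<phi> [b] $ 1 $ 0 = \<phi> [(F, b)]"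
  by (simp_all add: Phi_len1 sum_sl2b)

lemma Phi_len0: "Phi \<phi> [] = mat (\<phi> [])"
proof -
  have "{as :: sl2b list. length as = length ([] :: 'b list)} = {[]}" by auto
  then show ?thesis by (simp add: Phi_alt vec_eq_iff mat_def)
qed

lemma zip_split: "w = zip (map fst w) (map snd w)" by (simp add: zip_map_fst_snd)

lemma neg1_pow_sq: "((-1::'k::comm_ring_1)^k) * (-1)^k = 1"
  by (simp add: power_add[symmetric])

lemma neg1_pow_nz: "((-1::'k::comm_ring_1)^k) * x = 0 \<Longrightarrow> x = 0"
  by (metis mult.assoc mult_1 mult_zero_right neg1_pow_sq)

lemma normal_inj:
  assumes nf: "\<And>w. \<phi> w \<noteq> 0 \<Longrightarrow> normal (map fst w)" and z: "\<And>\<beta>. Phi \<phi> \<beta> = (0 :: 'k::comm_ring_1^2^2)"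
  shows "\<phi> w = 0"
proof (rule ccontr)
  assume nz: "\<phi> w \<noteq> 0"
  define as where "as = map fst w"
  define \<beta> where "\<beta> = map snd w"
  have w: "w = zip as \<beta>" "length as = length \<beta>" unfolding as_def \<beta>_def by (simp_all add: zip_map_fst_snd)
  have "normal as" using nf[OF nz] by (simp add: as_def)
  then consider "length as = 0" | "length as = 1" | p k where "p \<in> NP" "as = p @ replicate k H"
    unfolding normal_def by (fastforce simp: le_Suc_eq)
  then show False
  proof cases
    case 1
    then have "w = []" using w by simp
    then show False using z[of "[]"] nz by (simp add: Phi_len0 mat2_eq)
  next
    case 2
    then obtain a b where ab: "w = [(a, b)]" using w by (auto simp: length_Suc_conv)
    then have "\<beta> = [b]" using \<beta>_def by simp
    then show False using z[of "[b]"] nz ab by (cases a) (simp_all add: Phi_len1_nth mat2_eq)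
  next
    case 3
    then have len: "length \<beta> = k + 2" using w by (auto simp: NP_def)
    have e: "Phi \<phi> \<beta> $ 0 $ 0 = 0" "Phi \<phi> \<beta> $ 1 $ 1 = 0" "Phi \<phi> \<beta> $ 0 $ 1 = 0" "Phi \<phi> \<beta> $ 1 $ 0 = 0"
      using z[of \<beta>] by simp_all
    note f = Phi_normal_ge2_nth[of \<phi> \<beta> k, OF nf len]
    from 3(1) show False
      unfolding NP_def using e f nz w 3(2)
      by (auto dest: neg1_pow_nz)
  qed
qed

definition cf :: "('b list \<Rightarrow> 'k::comm_ring_1^2^2) \<Rightarrow> (sl2b \<times> 'b) list \<Rightarrow> 'k" where
  "cf M w = (let as = map fst w; \<beta> = map snd w; k = length as - 2 in
     if as = [] then M \<beta> $ 0 $ 0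
     else if as = [E] then M \<beta> $ 0 $ 1
     else if as = [H] then M \<beta> $ 0 $ 0
     else if as = [F] then M \<beta> $ 1 $ 0
     else if as = [E,F] @ replicate k H then M \<beta> $ 0 $ 0
     else if as = [F,E] @ replicate k H then (-1)^k * M \<beta> $ 1 $ 1
     else if as = [H,E] @ replicate k H then (-1)^k * M \<beta> $ 0 $ 1
     else if as = [H,F] @ replicate k H then - M \<beta> $ 1 $ 0
     else 0)"

lemma cf_normal: "cf M w \<noteq> 0 \<Longrightarrow> normal (map fst w)"
  unfolding cf_def normal_def NP_def Let_def
  by (auto split: if_splits)

lemma cf_supp: "cf M w \<noteq> 0 \<Longrightarrow> M (map snd w) \<noteq> 0"
  unfolding cf_def Let_def by (auto split: if_splits)

lemma finsupp_cf: assumes "finite {\<beta>. M \<beta> \<noteq> 0}" shows "finsupp (cf M)"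
proof -
  have "{w. cf M w \<noteq> 0} \<subseteq> (\<Union>\<beta>\<in>{\<beta>. M \<beta> \<noteq> 0}. (\<lambda>as. zip as \<beta>) ` {as. length as = length \<beta>})"
  proof
    fix w assume "w \<in> {w. cf M w \<noteq> 0}"
    then have "M (map snd w) \<noteq> 0" using cf_supp by auto
    then show "w \<in> (\<Union>\<beta>\<in>{\<beta>. M \<beta> \<noteq> 0}. (\<lambda>as. zip as \<beta>) ` {as. length as = length \<beta>})"
      by (intro UN_I[of "map snd w"] image_eqI[of _ _ "map fst w"]) (simp_all add: zip_map_fst_snd)
  qed
  moreover have "finite (\<Union>\<beta>\<in>{\<beta>. M \<beta> \<noteq> 0}. (\<lambda>as. zip as \<beta>) ` {as :: sl2b list. length as = length \<beta>})"
    using assms by auto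
  ultimately show ?thesis unfolding finsupp_def by (rule finite_subset)
qed

lemma Phi_cf:
  assumes "M \<in> TKK_alg"
  shows "Phi (cf M) \<beta> = M \<beta>"
proof -
  obtain c where c: "M [] = mat c" using assms by (auto simp: TKK_alg_def)
  have tr: "length \<beta> = 1 \<Longrightarrow> M \<beta> $ 0 $ 0 + M \<beta> $ 1 $ 1 = 0" using assms by (auto simp: TKK_alg_def)
  consider "length \<beta> = 0" | "length \<beta> = 1" | k where "length \<beta> = k + 2"
    by (metis One_nat_def add_2_eq_Suc' less_Suc_eq_0_disj less_imp_Suc_add linorder_neqE_nat not_less_eq)
  then show ?thesis
  proof cases
    case 1
    then show ?thesis using c by (simp add: Phi_len0 cf_def mat2_eq)
  next
    case 2
    then obtain b where b: "\<beta> = [b]" by (auto simp: length_Suc_conv)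
    have "M \<beta> $ 1 $ 1 = - M \<beta> $ 0 $ 0" using tr[OF 2] by (simp add: eq_neg_iff_add_eq_0 add.commute)
    then show ?thesis using b by (simp add: Phi_len1_nth mat2_eq cf_def)
  next
    case 3
    note f = Phi_normal_ge2_nth[of "cf M" \<beta> k, OF cf_normal[of M] 3]
    have m: "map fst (zip (p @ replicate k H) \<beta>) = p @ replicate k H" "map snd (zip (p @ replicate k H) \<beta>) = \<beta>"
      if "length p = 2" for p using 3 that by simp_all
    show ?thesis using f 3
      by (simp add: mat2_eq cf_def m mult.assoc[symmetric] neg1_pow_sq)
  qed
qed

lemma Phi_in_TKK:
  assumes "finsupp \<phi>"
  shows "Phi \<phi> \<in> TKK_alg"
proof -
  have "{\<beta>. Phi \<phi> \<beta> \<noteq> 0} \<subseteq> map snd ` {w. \<phi> w \<noteq> 0}"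
  proof
    fix \<beta> assume "\<beta> \<in> {\<beta>. Phi \<phi> \<beta> \<noteq> 0}"
    then have "(\<Sum>as\<in>{as. length as = length \<beta>}. smat (\<phi> (zip as \<beta>)) (P as)) \<noteq> 0"
      by (simp add: Phi_alt)
    then obtain as where "length as = length \<beta>" "smat (\<phi> (zip as \<beta>)) (P as) \<noteq> 0"
      using sum.not_neutral_contains_not_neutral by blast
    then have "\<phi> (zip as \<beta>) \<noteq> 0" "\<beta> = map snd (zip as \<beta>)" by auto
    then show "\<beta> \<in> map snd ` {w. \<phi> w \<noteq> 0}" by blast
  qed
  then have "finite {\<beta>. Phi \<phi> \<beta> \<noteq> 0}" using assms unfolding finsupp_def
    by (rule finite_subset[OF _ finite_imageI])
  moreover have "Phi \<phi> [] = mat (\<phi> [])" by (rule Phi_len0)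
  moreover have "Phi \<phi> \<beta> $ 0 $ 0 + Phi \<phi> \<beta> $ 1 $ 1 = 0" if l: "length \<beta> = 1" for \<beta>
  proof -
    obtain b where "\<beta> = [b]" using l by (auto simp: length_Suc_conv)
    then show ?thesis by (simp add: Phi_len1_nth)
  qed
  ultimately show ?thesis unfolding TKK_alg_def by blast
qed

lemma image_Phi: "Phi ` {\<phi> :: _ \<Rightarrow> 'k::comm_ring_1. finsupp \<phi>} = TKK_alg"
proof
  show "Phi ` {\<phi>. finsupp \<phi>} \<subseteq> (TKK_alg :: (_ \<Rightarrow> 'k^2^2) set)" using Phi_in_TKK by auto
next
  show "(TKK_alg :: (_ \<Rightarrow> 'k^2^2) set) \<subseteq> Phi ` {\<phi>. finsupp \<phi>}"
  proof
    fix M assume M: "M \<in> TKK_alg"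
    then have "finsupp (cf M)" by (intro finsupp_cf) (simp add: TKK_alg_def)
    moreover have "Phi (cf M) = M" using Phi_cf[OF M] by auto
    ultimately show "M \<in> Phi ` {\<phi>. finsupp \<phi>}" by (metis (mono_tags, lifting) image_eqI mem_Collect_eq)
  qed
qed


(* ---- Rel.thy ---- *)


definition emb2 :: "'b \<Rightarrow> 'b \<Rightarrow> (sl2b \<Rightarrow> sl2b \<Rightarrow> 'k) \<Rightarrow> (sl2b \<times> 'b) list \<Rightarrow> 'k::comm_ring_1" where
  "emb2 b1 b2 g w = (if map snd w = [b1, b2] then g (fst (w!0)) (fst (w!1)) else 0)"

definition emb3 :: "'b \<Rightarrow> 'b \<Rightarrow> 'b \<Rightarrow> (sl2b \<Rightarrow> sl2b \<Rightarrow> sl2b \<Rightarrow> 'k) \<Rightarrow> (sl2b \<times> 'b) list \<Rightarrow> 'k::comm_ring_1" where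
  "emb3 b1 b2 b3 G w = (if map snd w = [b1, b2, b3] then G (fst (w!0)) (fst (w!1)) (fst (w!2)) else 0)"

definition gact :: "sl2b \<Rightarrow> (sl2b \<Rightarrow> sl2b \<Rightarrow> 'k::comm_ring_1) \<Rightarrow> sl2b \<Rightarrow> sl2b \<Rightarrow> 'k" where
  "gact X g x y = (\<Sum>a\<in>UNIV. coef X a x * g a y) + (\<Sum>a\<in>UNIV. coef X a y * g x a)"

lemma map_snd_2: "map snd w = [b1, b2] \<Longrightarrow> \<exists>x y. w = [(x, b1), (y, b2)]"
  by (cases w; cases "tl w"; auto)

lemma map_snd_3: "map snd w = [b1, b2, b3] \<Longrightarrow> \<exists>x y z. w = [(x, b1), (y, b2), (z, b3)]"
  by (cases w; cases "tl w"; cases "tl (tl w)"; auto)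

lemma act_emb2: "act X (emb2 b1 b2 g) = emb2 b1 b2 (gact X g)"
proof (rule ext)
  fix w
  show "act X (emb2 b1 b2 g) w = emb2 b1 b2 (gact X g) w"
  proof (cases "map snd w = [b1, b2]")
    case True
    then obtain x y where w: "w = [(x, b1), (y, b2)]" using map_snd_2[OF True] by blast
    have s2: "(\<Sum>i<2. f i) = f 0 + f (1::nat)" for f :: "nat \<Rightarrow> 'b"
      by (simp add: numeral_2_eq_2)
    show ?thesis
      by (simp add: w act_def emb2_def gact_def s2 sum_sl2b)
  next
    case False
    have "map snd (w[i := (a, snd (w ! i))]) = map snd w" for i a
      by (metis list_update_id map_update snd_conv)
    then show ?thesis using False by (simp add: act_def emb2_def)
  qed
qed

lemma finsupp_emb2: "finsupp (emb2 b1 b2 g)"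
proof -
  have "{w. emb2 b1 b2 g w \<noteq> 0} \<subseteq> (\<lambda>p. [(fst p, b1), (snd p, b2)]) ` UNIV"
  proof
    fix w assume "w \<in> {w. emb2 b1 b2 g w \<noteq> 0}"
    then have m: "map snd w = [b1, b2]" by (auto simp: emb2_def split: if_splits)
    obtain x y where "w = [(x, b1), (y, b2)]" using map_snd_2[OF m] by blast
    then show "w \<in> (\<lambda>p. [(fst p, b1), (snd p, b2)]) ` UNIV" by (intro image_eqI[of _ _ "(x, y)"]) auto
  qed
  then show ?thesis unfolding finsupp_def by (rule finite_subset) simp
qed

lemma finsupp_emb3: "finsupp (emb3 b1 b2 b3 G)"
proof -
  have "{w. emb3 b1 b2 b3 G w \<noteq> 0} \<subseteq> (\<lambda>p. [(fst p, b1), (fst (snd p), b2), (snd (snd p), b3)]) ` UNIV"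
  proof
    fix w assume "w \<in> {w. emb3 b1 b2 b3 G w \<noteq> 0}"
    then have m: "map snd w = [b1, b2, b3]" by (auto simp: emb3_def split: if_splits)
    obtain x y z where "w = [(x, b1), (y, b2), (z, b3)]" using map_snd_3[OF m] by blast
    then show "w \<in> (\<lambda>p. [(fst p, b1), (fst (snd p), b2), (snd (snd p), b3)]) ` UNIV"
      by (intro image_eqI[of _ _ "(x, y, z)"]) auto
  qed
  then show ?thesis unfolding finsupp_def by (rule finite_subset) simp
qed

lemma act_pow_emb2: "(act X ^^ i) (emb2 b1 b2 g) = emb2 b1 b2 ((gact X ^^ i) g)"
  by (induction i) (simp_all add: act_emb2)

definition d2 :: "sl2b \<Rightarrow> sl2b \<Rightarrow> sl2b \<Rightarrow> sl2b \<Rightarrow> 'k::comm_ring_1" where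
  "d2 a b x y = (if x = a \<and> y = b then 1 else 0)"

definition rEE :: "sl2b \<Rightarrow> sl2b \<Rightarrow> 'k::comm_ring_1" where "rEE x y = d2 E E x y"
definition rEH :: "sl2b \<Rightarrow> sl2b \<Rightarrow> 'k::comm_ring_1" where "rEH x y = d2 E H x y + d2 H E x y"
definition rHH :: "sl2b \<Rightarrow> sl2b \<Rightarrow> 'k::comm_ring_1" where "rHH x y = d2 H H x y - d2 E F x y - d2 F E x y"
definition rFH :: "sl2b \<Rightarrow> sl2b \<Rightarrow> 'k::comm_ring_1" where "rFH x y = d2 F H x y + d2 H F x y"
definition rFF :: "sl2b \<Rightarrow> sl2b \<Rightarrow> 'k::comm_ring_1" where "rFF x y = d2 F F x y"

lemma gact_uminus: "gact X (\<lambda>x y. - g x y) = (\<lambda>x y. - gact X g x y)"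
  by (simp add: fun_eq_iff gact_def sum_negf[symmetric] add.commute)

lemma gact_smult: "gact X (\<lambda>x y. c * g x y) = (\<lambda>x y. c * gact X g x y)"
  by (simp add: fun_eq_iff gact_def sum_distrib_left distrib_left mult.left_commute)

lemma all_sl2b: "(\<forall>x::sl2b. Q x) \<longleftrightarrow> Q E \<and> Q H \<and> Q F"
  by (metis sl2b.exhaust)

lemma gact_E_EE: "gact E rEE = (\<lambda>x y. 0)"
  by (simp add: fun_eq_iff all_sl2b gact_def sum_sl2b rEE_def d2_def)
lemma gact_H_EE: "gact H rEE = (\<lambda>x y. 4 * rEE x y)"
  by (simp add: fun_eq_iff all_sl2b gact_def sum_sl2b rEE_def d2_def)
lemma gact_F_EE: "gact F rEE = (\<lambda>x y. -1 * rEH x y)"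
  by (simp add: fun_eq_iff all_sl2b gact_def sum_sl2b rEE_def rEH_def d2_def)
lemma gact_F_EH: "gact F rEH = (\<lambda>x y. -2 * rHH x y)"
  by (simp add: fun_eq_iff all_sl2b gact_def sum_sl2b rEH_def rHH_def d2_def)
lemma gact_F_HH: "gact F rHH = (\<lambda>x y. 3 * rFH x y)"
  by (simp add: fun_eq_iff all_sl2b gact_def sum_sl2b rHH_def rFH_def d2_def)
lemma gact_F_FH: "gact F rFH = (\<lambda>x y. 4 * rFF x y)"
  by (simp add: fun_eq_iff all_sl2b gact_def sum_sl2b rFH_def rFF_def d2_def)

lemma emb2_smult: "emb2 b1 b2 (\<lambda>x y. c * g x y) = (\<lambda>w. c * emb2 b1 b2 g w)"
  by (simp add: fun_eq_iff emb2_def)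
lemma emb2_zero: "emb2 b1 b2 (\<lambda>x y. 0) = (\<lambda>w. 0)"
  by (simp add: fun_eq_iff emb2_def)
lemma emb2_add: "emb2 b1 b2 (\<lambda>x y. g1 x y + g2 x y) = (\<lambda>w. emb2 b1 b2 g1 w + emb2 b1 b2 g2 w)"
  by (simp add: fun_eq_iff emb2_def)
lemma emb3_smult: "emb3 b1 b2 b3 (\<lambda>x y z. c * g x y z) = (\<lambda>w. c * emb3 b1 b2 b3 g w)"
  by (simp add: fun_eq_iff emb3_def)
lemma emb3_add: "emb3 b1 b2 b3 (\<lambda>x y z. g1 x y z + g2 x y z) = (\<lambda>w. emb3 b1 b2 b3 g1 w + emb3 b1 b2 b3 g2 w)"
  by (simp add: fun_eq_iff emb3_def)

lemma hwv_EE: "hwv 4 (emb2 b1 b2 (rEE :: _ \<Rightarrow> _ \<Rightarrow> 'k::comm_ring_1))"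
  unfolding hwv_def
  by (simp add: finsupp_emb2 act_emb2 gact_E_EE gact_H_EE emb2_zero emb2_smult)

abbreviation I where "I \<equiv> ideal_gen bad_components"

lemma bad_EE: "emb2 b1 b2 ((gact F ^^ i) rEE) \<in> (bad_components :: ((sl2b \<times> 'b) list \<Rightarrow> 'k::comm_ring_1) set)"
proof -
  have e: "emb2 b1 b2 ((gact F ^^ i) rEE) = (act F ^^ i) (emb2 b1 b2 (rEE :: _ \<Rightarrow> _ \<Rightarrow> 'k))" by (simp add: act_pow_emb2)
  have "(4::nat) \<noteq> 0" "(4::nat) \<noteq> 2" by simp_all
  then show ?thesis unfolding bad_components_def e using hwv_EE[of b1 b2] by blast
qed

definition R2 :: "'b \<Rightarrow> 'b \<Rightarrow> (sl2b \<Rightarrow> sl2b \<Rightarrow> 'k::comm_ring_1) set" where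
  "R2 b1 b2 = {g. emb2 b1 b2 g \<in> I}"
definition R3 :: "'b \<Rightarrow> 'b \<Rightarrow> 'b \<Rightarrow> (sl2b \<Rightarrow> sl2b \<Rightarrow> sl2b \<Rightarrow> 'k::comm_ring_1) set" where
  "R3 b1 b2 b3 = {G. emb3 b1 b2 b3 G \<in> I}"

lemma R2_smult: "g \<in> R2 b1 b2 \<Longrightarrow> (\<lambda>x y. c * g x y) \<in> R2 b1 b2"
  by (simp add: R2_def emb2_smult ideal_smult)
lemma R3_smult: "g \<in> R3 b1 b2 b3 \<Longrightarrow> (\<lambda>x y z. c * g x y z) \<in> R3 b1 b2 b3"
  by (simp add: R3_def emb3_smult ideal_smult)
lemma R3_add: "g1 \<in> R3 b1 b2 b3 \<Longrightarrow> g2 \<in> R3 b1 b2 b3 \<Longrightarrow> (\<lambda>x y z. g1 x y z + g2 x y z) \<in> R3 b1 b2 b3"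
  by (simp add: R3_def emb3_add ideal_gen.add)

lemma bad_R2: "(gact F ^^ i) rEE \<in> R2 b1 b2"
  unfolding R2_def by (rule CollectI, rule ideal_gen_mem[OF bad_EE])

lemma rEE_R2: "(rEE :: _ \<Rightarrow> _ \<Rightarrow> 'k::field_char_0) \<in> R2 b1 b2"
  using bad_R2[of 0] by simp
lemma rEH_R2: "(rEH :: _ \<Rightarrow> _ \<Rightarrow> 'k::field_char_0) \<in> R2 b1 b2"
proof -
  have "(\<lambda>x y. inverse (-1) * ((gact F ^^ 1) rEE x y :: 'k)) \<in> R2 b1 b2" by (rule R2_smult[OF bad_R2])
  moreover have "(\<lambda>x y. inverse (-1) * ((gact F ^^ 1) rEE x y :: 'k)) = rEH"
    by (simp add: fun_eq_iff eval_nat_numeral gact_F_EE gact_smult gact_uminus gact_F_EH gact_F_HH gact_F_FH)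
  ultimately show ?thesis by simp
qed
lemma rHH_R2: "(rHH :: _ \<Rightarrow> _ \<Rightarrow> 'k::field_char_0) \<in> R2 b1 b2"
proof -
  have "(\<lambda>x y. inverse (2) * ((gact F ^^ 2) rEE x y :: 'k)) \<in> R2 b1 b2" by (rule R2_smult[OF bad_R2])
  moreover have "(\<lambda>x y. inverse (2) * ((gact F ^^ 2) rEE x y :: 'k)) = rHH"
    by (simp add: fun_eq_iff eval_nat_numeral gact_F_EE gact_smult gact_uminus gact_F_EH gact_F_HH gact_F_FH)
  ultimately show ?thesis by simp
qed
lemma rFH_R2: "(rFH :: _ \<Rightarrow> _ \<Rightarrow> 'k::field_char_0) \<in> R2 b1 b2"
proof -
  have "(\<lambda>x y. inverse (6) * ((gact F ^^ 3) rEE x y :: 'k)) \<in> R2 b1 b2" by (rule R2_smult[OF bad_R2])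
  moreover have "(\<lambda>x y. inverse (6) * ((gact F ^^ 3) rEE x y :: 'k)) = rFH"
    by (simp add: fun_eq_iff eval_nat_numeral gact_F_EE gact_smult gact_uminus gact_F_EH gact_F_HH gact_F_FH)
  ultimately show ?thesis by simp
qed
lemma rFF_R2: "(rFF :: _ \<Rightarrow> _ \<Rightarrow> 'k::field_char_0) \<in> R2 b1 b2"
proof -
  have "(\<lambda>x y. inverse (24) * ((gact F ^^ 4) rEE x y :: 'k)) \<in> R2 b1 b2" by (rule R2_smult[OF bad_R2])
  moreover have "(\<lambda>x y. inverse (24) * ((gact F ^^ 4) rEE x y :: 'k)) = rFF"
    by (simp add: fun_eq_iff eval_nat_numeral gact_F_EE gact_smult gact_uminus gact_F_EH gact_F_HH gact_F_FH)
  ultimately show ?thesis by simp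
qed


(* ---- Red.thy ---- *)


definition genL :: "(sl2b \<Rightarrow> sl2b \<Rightarrow> 'k) \<Rightarrow> sl2b \<Rightarrow> sl2b \<Rightarrow> sl2b \<Rightarrow> sl2b \<Rightarrow> 'k::comm_ring_1" where
  "genL r z0 x y z = r x y * (if z = z0 then 1 else 0)"
definition genR :: "sl2b \<Rightarrow> (sl2b \<Rightarrow> sl2b \<Rightarrow> 'k) \<Rightarrow> sl2b \<Rightarrow> sl2b \<Rightarrow> sl2b \<Rightarrow> 'k::comm_ring_1" where
  "genR x0 r x y z = (if x = x0 then 1 else 0) * r y z"
definition d3 :: "sl2b \<Rightarrow> sl2b \<Rightarrow> sl2b \<Rightarrow> sl2b \<Rightarrow> sl2b \<Rightarrow> sl2b \<Rightarrow> 'k::comm_ring_1" where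
  "d3 a b c x y z = (if x = a \<and> y = b \<and> z = c then 1 else 0)"

lemma tmul_emb2_dl: "tmul (emb2 b1 b2 r) (dl [(z0, b3)]) = emb3 b1 b2 b3 (genL r z0)"
proof (rule ext)
  fix w
  show "tmul (emb2 b1 b2 r) (dl [(z0, b3)]) w = emb3 b1 b2 b3 (genL r z0) w"
  proof (cases "map snd w = [b1, b2, b3]")
    case True
    then obtain x y z where w: "w = [(x, b1), (y, b2), (z, b3)]" using map_snd_3[OF True] by blast
    show ?thesis by (simp add: w tmul_dl_r emb2_def emb3_def genL_def)
  next
    case False
    have "emb2 b1 b2 r (take (length w - 1) w) = 0" if "drop (length w - 1) w = [(z0, b3)]"
    proof (rule ccontr)
      assume "emb2 b1 b2 r (take (length w - 1) w) \<noteq> 0"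
      then have "map snd (take (length w - 1) w) = [b1, b2]" by (simp add: emb2_def split: if_splits)
      then have "map snd (take (length w - 1) w @ drop (length w - 1) w) = [b1, b2, b3]" using that by simp
      then show False using False by simp
    qed
    then show ?thesis using False by (simp add: tmul_dl_r emb3_def)
  qed
qed

lemma tmul_dl_emb2: "tmul (dl [(x0, b1)]) (emb2 b2 b3 r) = emb3 b1 b2 b3 (genR x0 r)"
proof (rule ext)
  fix w
  show "tmul (dl [(x0, b1)]) (emb2 b2 b3 r) w = emb3 b1 b2 b3 (genR x0 r) w"
  proof (cases "map snd w = [b1, b2, b3]")
    case True
    then obtain x y z where w: "w = [(x, b1), (y, b2), (z, b3)]" using map_snd_3[OF True] by blast
    show ?thesis by (simp add: w tmul_dl_l emb2_def emb3_def genR_def)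
  next
    case False
    have "emb2 b2 b3 r (drop 1 w) = 0" if "take 1 w = [(x0, b1)]"
    proof (rule ccontr)
      assume "emb2 b2 b3 r (drop 1 w) \<noteq> 0"
      then have "map snd (drop 1 w) = [b2, b3]" by (simp add: emb2_def split: if_splits)
      then have "map snd (take 1 w @ drop 1 w) = [b1, b2, b3]" using that by simp
      then show False using False by simp
    qed
    then show ?thesis using False by (simp add: tmul_dl_l emb3_def)
  qed
qed

lemma genL_R3: "r \<in> R2 b1 b2 \<Longrightarrow> genL r z0 \<in> (R3 b1 b2 b3 :: (_ \<Rightarrow> _ \<Rightarrow> _ \<Rightarrow> 'k::comm_ring_1) set)"
  unfolding R2_def R3_def using ideal_rmul[of "emb2 b1 b2 r" bad_components "dl [(z0, b3)]"]
  by (simp add: tmul_emb2_dl)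

lemma genR_R3: "r \<in> R2 b2 b3 \<Longrightarrow> genR x0 r \<in> (R3 b1 b2 b3 :: (_ \<Rightarrow> _ \<Rightarrow> _ \<Rightarrow> 'k::comm_ring_1) set)"
  unfolding R2_def R3_def using ideal_lmul[of "emb2 b2 b3 r" bad_components "dl [(x0, b1)]"]
  by (simp add: tmul_dl_emb2)

lemma red3_EEF: "\<exists>G. (\<forall>x y z. G x y z \<noteq> 0 \<longrightarrow> [x, y] \<in> NP \<and> z = H) \<and>
   (\<lambda>x y z. d3 E E F x y z - G x y z) \<in> (R3 b1 b2 b3 :: (_ \<Rightarrow> _ \<Rightarrow> _ \<Rightarrow> 'k::field_char_0) set)"
proof (intro exI conjI)
  let ?G = "\<lambda>x y z. 0 :: 'k"
  show "\<forall>x y z. ?G x y z \<noteq> 0 \<longrightarrow> [x, y] \<in> NP \<and> z = H"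
    by (simp add: all_sl2b d3_def NP_def)
  have eq: "(\<lambda>x y z. d3 E E F x y z - ?G x y z) = (\<lambda>x y z. (1) * genL rEE F x y z)"
    by (simp add: fun_eq_iff all_sl2b d3_def genL_def genR_def rEE_def rEH_def rHH_def rFH_def rFF_def d2_def)
  have mem: "(\<lambda>x y z. (1) * genL rEE F x y z) \<in> (R3 b1 b2 b3 :: (_ \<Rightarrow> _ \<Rightarrow> _ \<Rightarrow> 'k) set)"
    by (intro R3_add R3_smult genL_R3 genR_R3 rEE_R2 rEH_R2 rHH_R2 rFH_R2 rFF_R2)
  show "(\<lambda>x y z. d3 E E F x y z - ?G x y z) \<in> R3 b1 b2 b3" unfolding eq by (rule mem)
qed

lemma red3_EFE: "\<exists>G. (\<forall>x y z. G x y z \<noteq> 0 \<longrightarrow> [x, y] \<in> NP \<and> z = H) \<and>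
   (\<lambda>x y z. d3 E F E x y z - G x y z) \<in> (R3 b1 b2 b3 :: (_ \<Rightarrow> _ \<Rightarrow> _ \<Rightarrow> 'k::field_char_0) set)"
proof (intro exI conjI)
  let ?G = "\<lambda>x y z. (-1) * d3 H E H x y z :: 'k"
  show "\<forall>x y z. ?G x y z \<noteq> 0 \<longrightarrow> [x, y] \<in> NP \<and> z = H"
    by (simp add: all_sl2b d3_def NP_def)
  have eq: "(\<lambda>x y z. d3 E F E x y z - ?G x y z) = (\<lambda>x y z. (-1) * genL rEE F x y z + (1) * genL rEH H x y z + (-1) * genR E rHH x y z)"
    by (simp add: fun_eq_iff all_sl2b d3_def genL_def genR_def rEE_def rEH_def rHH_def rFH_def rFF_def d2_def)
  have mem: "(\<lambda>x y z. (-1) * genL rEE F x y z + (1) * genL rEH H x y z + (-1) * genR E rHH x y z) \<in> (R3 b1 b2 b3 :: (_ \<Rightarrow> _ \<Rightarrow> _ \<Rightarrow> 'k) set)"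
    by (intro R3_add R3_smult genL_R3 genR_R3 rEE_R2 rEH_R2 rHH_R2 rFH_R2 rFF_R2)
  show "(\<lambda>x y z. d3 E F E x y z - ?G x y z) \<in> R3 b1 b2 b3" unfolding eq by (rule mem)
qed

lemma red3_EHE: "\<exists>G. (\<forall>x y z. G x y z \<noteq> 0 \<longrightarrow> [x, y] \<in> NP \<and> z = H) \<and>
   (\<lambda>x y z. d3 E H E x y z - G x y z) \<in> (R3 b1 b2 b3 :: (_ \<Rightarrow> _ \<Rightarrow> _ \<Rightarrow> 'k::field_char_0) set)"
proof (intro exI conjI)
  let ?G = "\<lambda>x y z. 0 :: 'k"
  show "\<forall>x y z. ?G x y z \<noteq> 0 \<longrightarrow> [x, y] \<in> NP \<and> z = H"
    by (simp add: all_sl2b d3_def NP_def)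
  have eq: "(\<lambda>x y z. d3 E H E x y z - ?G x y z) = (\<lambda>x y z. (-1) * genL rEE H x y z + (1) * genR E rEH x y z)"
    by (simp add: fun_eq_iff all_sl2b d3_def genL_def genR_def rEE_def rEH_def rHH_def rFH_def rFF_def d2_def)
  have mem: "(\<lambda>x y z. (-1) * genL rEE H x y z + (1) * genR E rEH x y z) \<in> (R3 b1 b2 b3 :: (_ \<Rightarrow> _ \<Rightarrow> _ \<Rightarrow> 'k) set)"
    by (intro R3_add R3_smult genL_R3 genR_R3 rEE_R2 rEH_R2 rHH_R2 rFH_R2 rFF_R2)
  show "(\<lambda>x y z. d3 E H E x y z - ?G x y z) \<in> R3 b1 b2 b3" unfolding eq by (rule mem)
qed

lemma red3_EHF: "\<exists>G. (\<forall>x y z. G x y z \<noteq> 0 \<longrightarrow> [x, y] \<in> NP \<and> z = H) \<and>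
   (\<lambda>x y z. d3 E H F x y z - G x y z) \<in> (R3 b1 b2 b3 :: (_ \<Rightarrow> _ \<Rightarrow> _ \<Rightarrow> 'k::field_char_0) set)"
proof (intro exI conjI)
  let ?G = "\<lambda>x y z. (-1) * d3 E F H x y z :: 'k"
  show "\<forall>x y z. ?G x y z \<noteq> 0 \<longrightarrow> [x, y] \<in> NP \<and> z = H"
    by (simp add: all_sl2b d3_def NP_def)
  have eq: "(\<lambda>x y z. d3 E H F x y z - ?G x y z) = (\<lambda>x y z. (1) * genR E rFH x y z)"
    by (simp add: fun_eq_iff all_sl2b d3_def genL_def genR_def rEE_def rEH_def rHH_def rFH_def rFF_def d2_def)
  have mem: "(\<lambda>x y z. (1) * genR E rFH x y z) \<in> (R3 b1 b2 b3 :: (_ \<Rightarrow> _ \<Rightarrow> _ \<Rightarrow> 'k) set)"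
    by (intro R3_add R3_smult genL_R3 genR_R3 rEE_R2 rEH_R2 rHH_R2 rFH_R2 rFF_R2)
  show "(\<lambda>x y z. d3 E H F x y z - ?G x y z) \<in> R3 b1 b2 b3" unfolding eq by (rule mem)
qed

lemma red3_HEF: "\<exists>G. (\<forall>x y z. G x y z \<noteq> 0 \<longrightarrow> [x, y] \<in> NP \<and> z = H) \<and>
   (\<lambda>x y z. d3 H E F x y z - G x y z) \<in> (R3 b1 b2 b3 :: (_ \<Rightarrow> _ \<Rightarrow> _ \<Rightarrow> 'k::field_char_0) set)"
proof (intro exI conjI)
  let ?G = "\<lambda>x y z. (1) * d3 E F H x y z :: 'k"
  show "\<forall>x y z. ?G x y z \<noteq> 0 \<longrightarrow> [x, y] \<in> NP \<and> z = H"
    by (simp add: all_sl2b d3_def NP_def)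
  have eq: "(\<lambda>x y z. d3 H E F x y z - ?G x y z) = (\<lambda>x y z. (1) * genL rEH F x y z + (-1) * genR E rFH x y z)"
    by (simp add: fun_eq_iff all_sl2b d3_def genL_def genR_def rEE_def rEH_def rHH_def rFH_def rFF_def d2_def)
  have mem: "(\<lambda>x y z. (1) * genL rEH F x y z + (-1) * genR E rFH x y z) \<in> (R3 b1 b2 b3 :: (_ \<Rightarrow> _ \<Rightarrow> _ \<Rightarrow> 'k) set)"
    by (intro R3_add R3_smult genL_R3 genR_R3 rEE_R2 rEH_R2 rHH_R2 rFH_R2 rFF_R2)
  show "(\<lambda>x y z. d3 H E F x y z - ?G x y z) \<in> R3 b1 b2 b3" unfolding eq by (rule mem)
qed

lemma red3_HFE: "\<exists>G. (\<forall>x y z. G x y z \<noteq> 0 \<longrightarrow> [x, y] \<in> NP \<and> z = H) \<and>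
   (\<lambda>x y z. d3 H F E x y z - G x y z) \<in> (R3 b1 b2 b3 :: (_ \<Rightarrow> _ \<Rightarrow> _ \<Rightarrow> 'k::field_char_0) set)"
proof (intro exI conjI)
  let ?G = "\<lambda>x y z. (1) * d3 F E H x y z :: 'k"
  show "\<forall>x y z. ?G x y z \<noteq> 0 \<longrightarrow> [x, y] \<in> NP \<and> z = H"
    by (simp add: all_sl2b d3_def NP_def)
  have eq: "(\<lambda>x y z. d3 H F E x y z - ?G x y z) = (\<lambda>x y z. (-1) * genL rEH F x y z + (1) * genL rHH H x y z + (1) * genR E rFH x y z + (-1) * genR H rHH x y z)"
    by (simp add: fun_eq_iff all_sl2b d3_def genL_def genR_def rEE_def rEH_def rHH_def rFH_def rFF_def d2_def)
  have mem: "(\<lambda>x y z. (-1) * genL rEH F x y z + (1) * genL rHH H x y z + (1) * genR E rFH x y z + (-1) * genR H rHH x y z) \<in> (R3 b1 b2 b3 :: (_ \<Rightarrow> _ \<Rightarrow> _ \<Rightarrow> 'k) set)"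
    by (intro R3_add R3_smult genL_R3 genR_R3 rEE_R2 rEH_R2 rHH_R2 rFH_R2 rFF_R2)
  show "(\<lambda>x y z. d3 H F E x y z - ?G x y z) \<in> R3 b1 b2 b3" unfolding eq by (rule mem)
qed

lemma red3_HHE: "\<exists>G. (\<forall>x y z. G x y z \<noteq> 0 \<longrightarrow> [x, y] \<in> NP \<and> z = H) \<and>
   (\<lambda>x y z. d3 H H E x y z - G x y z) \<in> (R3 b1 b2 b3 :: (_ \<Rightarrow> _ \<Rightarrow> _ \<Rightarrow> 'k::field_char_0) set)"
proof (intro exI conjI)
  let ?G = "\<lambda>x y z. (-1) * d3 H E H x y z :: 'k"
  show "\<forall>x y z. ?G x y z \<noteq> 0 \<longrightarrow> [x, y] \<in> NP \<and> z = H"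
    by (simp add: all_sl2b d3_def NP_def)
  have eq: "(\<lambda>x y z. d3 H H E x y z - ?G x y z) = (\<lambda>x y z. (1) * genR H rEH x y z)"
    by (simp add: fun_eq_iff all_sl2b d3_def genL_def genR_def rEE_def rEH_def rHH_def rFH_def rFF_def d2_def)
  have mem: "(\<lambda>x y z. (1) * genR H rEH x y z) \<in> (R3 b1 b2 b3 :: (_ \<Rightarrow> _ \<Rightarrow> _ \<Rightarrow> 'k) set)"
    by (intro R3_add R3_smult genL_R3 genR_R3 rEE_R2 rEH_R2 rHH_R2 rFH_R2 rFF_R2)
  show "(\<lambda>x y z. d3 H H E x y z - ?G x y z) \<in> R3 b1 b2 b3" unfolding eq by (rule mem)
qed

lemma red3_HHF: "\<exists>G. (\<forall>x y z. G x y z \<noteq> 0 \<longrightarrow> [x, y] \<in> NP \<and> z = H) \<and>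
   (\<lambda>x y z. d3 H H F x y z - G x y z) \<in> (R3 b1 b2 b3 :: (_ \<Rightarrow> _ \<Rightarrow> _ \<Rightarrow> 'k::field_char_0) set)"
proof (intro exI conjI)
  let ?G = "\<lambda>x y z. (-1) * d3 H F H x y z :: 'k"
  show "\<forall>x y z. ?G x y z \<noteq> 0 \<longrightarrow> [x, y] \<in> NP \<and> z = H"
    by (simp add: all_sl2b d3_def NP_def)
  have eq: "(\<lambda>x y z. d3 H H F x y z - ?G x y z) = (\<lambda>x y z. (1) * genR H rFH x y z)"
    by (simp add: fun_eq_iff all_sl2b d3_def genL_def genR_def rEE_def rEH_def rHH_def rFH_def rFF_def d2_def)
  have mem: "(\<lambda>x y z. (1) * genR H rFH x y z) \<in> (R3 b1 b2 b3 :: (_ \<Rightarrow> _ \<Rightarrow> _ \<Rightarrow> 'k) set)"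
    by (intro R3_add R3_smult genL_R3 genR_R3 rEE_R2 rEH_R2 rHH_R2 rFH_R2 rFF_R2)
  show "(\<lambda>x y z. d3 H H F x y z - ?G x y z) \<in> R3 b1 b2 b3" unfolding eq by (rule mem)
qed

lemma red3_FEF: "\<exists>G. (\<forall>x y z. G x y z \<noteq> 0 \<longrightarrow> [x, y] \<in> NP \<and> z = H) \<and>
   (\<lambda>x y z. d3 F E F x y z - G x y z) \<in> (R3 b1 b2 b3 :: (_ \<Rightarrow> _ \<Rightarrow> _ \<Rightarrow> 'k::field_char_0) set)"
proof (intro exI conjI)
  let ?G = "\<lambda>x y z. (-1) * d3 H F H x y z :: 'k"
  show "\<forall>x y z. ?G x y z \<noteq> 0 \<longrightarrow> [x, y] \<in> NP \<and> z = H"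
    by (simp add: all_sl2b d3_def NP_def)
  have eq: "(\<lambda>x y z. d3 F E F x y z - ?G x y z) = (\<lambda>x y z. (-1) * genL rHH F x y z + (-1) * genR E rFF x y z + (1) * genR H rFH x y z)"
    by (simp add: fun_eq_iff all_sl2b d3_def genL_def genR_def rEE_def rEH_def rHH_def rFH_def rFF_def d2_def)
  have mem: "(\<lambda>x y z. (-1) * genL rHH F x y z + (-1) * genR E rFF x y z + (1) * genR H rFH x y z) \<in> (R3 b1 b2 b3 :: (_ \<Rightarrow> _ \<Rightarrow> _ \<Rightarrow> 'k) set)"
    by (intro R3_add R3_smult genL_R3 genR_R3 rEE_R2 rEH_R2 rHH_R2 rFH_R2 rFF_R2)
  show "(\<lambda>x y z. d3 F E F x y z - ?G x y z) \<in> R3 b1 b2 b3" unfolding eq by (rule mem)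
qed

lemma red3_FFE: "\<exists>G. (\<forall>x y z. G x y z \<noteq> 0 \<longrightarrow> [x, y] \<in> NP \<and> z = H) \<and>
   (\<lambda>x y z. d3 F F E x y z - G x y z) \<in> (R3 b1 b2 b3 :: (_ \<Rightarrow> _ \<Rightarrow> _ \<Rightarrow> 'k::field_char_0) set)"
proof (intro exI conjI)
  let ?G = "\<lambda>x y z. 0 :: 'k"
  show "\<forall>x y z. ?G x y z \<noteq> 0 \<longrightarrow> [x, y] \<in> NP \<and> z = H"
    by (simp add: all_sl2b d3_def NP_def)
  have eq: "(\<lambda>x y z. d3 F F E x y z - ?G x y z) = (\<lambda>x y z. (1) * genL rFF E x y z)"
    by (simp add: fun_eq_iff all_sl2b d3_def genL_def genR_def rEE_def rEH_def rHH_def rFH_def rFF_def d2_def)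
  have mem: "(\<lambda>x y z. (1) * genL rFF E x y z) \<in> (R3 b1 b2 b3 :: (_ \<Rightarrow> _ \<Rightarrow> _ \<Rightarrow> 'k) set)"
    by (intro R3_add R3_smult genL_R3 genR_R3 rEE_R2 rEH_R2 rHH_R2 rFH_R2 rFF_R2)
  show "(\<lambda>x y z. d3 F F E x y z - ?G x y z) \<in> R3 b1 b2 b3" unfolding eq by (rule mem)
qed

lemma red3_FHE: "\<exists>G. (\<forall>x y z. G x y z \<noteq> 0 \<longrightarrow> [x, y] \<in> NP \<and> z = H) \<and>
   (\<lambda>x y z. d3 F H E x y z - G x y z) \<in> (R3 b1 b2 b3 :: (_ \<Rightarrow> _ \<Rightarrow> _ \<Rightarrow> 'k::field_char_0) set)"
proof (intro exI conjI)
  let ?G = "\<lambda>x y z. (-1) * d3 F E H x y z :: 'k"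
  show "\<forall>x y z. ?G x y z \<noteq> 0 \<longrightarrow> [x, y] \<in> NP \<and> z = H"
    by (simp add: all_sl2b d3_def NP_def)
  have eq: "(\<lambda>x y z. d3 F H E x y z - ?G x y z) = (\<lambda>x y z. (1) * genL rEH F x y z + (-1) * genL rHH H x y z + (1) * genL rFH E x y z + (-1) * genR E rFH x y z + (1) * genR H rHH x y z)"
    by (simp add: fun_eq_iff all_sl2b d3_def genL_def genR_def rEE_def rEH_def rHH_def rFH_def rFF_def d2_def)
  have mem: "(\<lambda>x y z. (1) * genL rEH F x y z + (-1) * genL rHH H x y z + (1) * genL rFH E x y z + (-1) * genR E rFH x y z + (1) * genR H rHH x y z) \<in> (R3 b1 b2 b3 :: (_ \<Rightarrow> _ \<Rightarrow> _ \<Rightarrow> 'k) set)"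
    by (intro R3_add R3_smult genL_R3 genR_R3 rEE_R2 rEH_R2 rHH_R2 rFH_R2 rFF_R2)
  show "(\<lambda>x y z. d3 F H E x y z - ?G x y z) \<in> R3 b1 b2 b3" unfolding eq by (rule mem)
qed

lemma red3_FHF: "\<exists>G. (\<forall>x y z. G x y z \<noteq> 0 \<longrightarrow> [x, y] \<in> NP \<and> z = H) \<and>
   (\<lambda>x y z. d3 F H F x y z - G x y z) \<in> (R3 b1 b2 b3 :: (_ \<Rightarrow> _ \<Rightarrow> _ \<Rightarrow> 'k::field_char_0) set)"
proof (intro exI conjI)
  let ?G = "\<lambda>x y z. 0 :: 'k"
  show "\<forall>x y z. ?G x y z \<noteq> 0 \<longrightarrow> [x, y] \<in> NP \<and> z = H"
    by (simp add: all_sl2b d3_def NP_def)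
  have eq: "(\<lambda>x y z. d3 F H F x y z - ?G x y z) = (\<lambda>x y z. (1) * genL rFH F x y z + (-1) * genR H rFF x y z)"
    by (simp add: fun_eq_iff all_sl2b d3_def genL_def genR_def rEE_def rEH_def rHH_def rFH_def rFF_def d2_def)
  have mem: "(\<lambda>x y z. (1) * genL rFH F x y z + (-1) * genR H rFF x y z) \<in> (R3 b1 b2 b3 :: (_ \<Rightarrow> _ \<Rightarrow> _ \<Rightarrow> 'k) set)"
    by (intro R3_add R3_smult genL_R3 genR_R3 rEE_R2 rEH_R2 rHH_R2 rFH_R2 rFF_R2)
  show "(\<lambda>x y z. d3 F H F x y z - ?G x y z) \<in> R3 b1 b2 b3" unfolding eq by (rule mem)
qed


(* ---- Ker.thy ---- *)


lemma red3:
  assumes "[y, z] \<in> NP"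
  shows "\<exists>G. (\<forall>x y z. G x y z \<noteq> 0 \<longrightarrow> [x, y] \<in> NP \<and> z = H) \<and>
   (\<lambda>x' y' z'. d3 x y z x' y' z' - G x' y' z') \<in> (R3 b1 b2 b3 :: (_ \<Rightarrow> _ \<Rightarrow> _ \<Rightarrow> 'k::field_char_0) set)"
proof -
  consider "y = E" "z = F" | "y = F" "z = E" | "y = H" "z = E" | "y = H" "z = F"
    using assms by (auto simp: NP_def)
  then show ?thesis
  proof cases
    case 1 show ?thesis unfolding 1 by (cases x) (simp_all only: red3_EEF red3_HEF red3_FEF)
  next
    case 2 show ?thesis unfolding 2 by (cases x) (simp_all only: red3_EFE red3_HFE red3_FFE)
  next
    case 3 show ?thesis unfolding 3 by (cases x) (simp_all only: red3_EHE red3_HHE red3_FHE)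
  next
    case 4 show ?thesis unfolding 4 by (cases x) (simp_all only: red3_EHF red3_HHF red3_FHF)
  qed
qed

lemma R2_zero: "(\<lambda>x y. 0) \<in> (R2 b1 b2 :: (_ \<Rightarrow> _ \<Rightarrow> 'k::field_char_0) set)"
  using R2_smult[OF rEE_R2, of 0] by simp

lemma red2: "\<exists>g. (\<forall>x y. g x y \<noteq> 0 \<longrightarrow> [x, y] \<in> NP) \<and>
   (\<lambda>x' y'. d2 x y x' y' - g x' y') \<in> (R2 b1 b2 :: (_ \<Rightarrow> _ \<Rightarrow> 'k::field_char_0) set)"
proof (cases "[x, y] \<in> NP")
  case True
  show ?thesis
    by (rule exI[of _ "d2 x y"]) (auto simp: d2_def True R2_zero)
next
  case False
  then consider "x = E" "y = E" | "x = F" "y = F" | "x = E" "y = H" | "x = F" "y = H" | "x = H" "y = H"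
    unfolding NP_def by (cases x; cases y) auto
  then show ?thesis
  proof cases
    case 1
    have "(\<lambda>x' y'. d2 x y x' y' - (0::'k)) = rEE" using 1 by (simp add: fun_eq_iff rEE_def)
    then show ?thesis using rEE_R2 by (intro exI[of _ "\<lambda>x y. 0"]) auto
  next
    case 2
    have "(\<lambda>x' y'. d2 x y x' y' - (0::'k)) = rFF" using 2 by (simp add: fun_eq_iff rFF_def)
    then show ?thesis using rFF_R2 by (intro exI[of _ "\<lambda>x y. 0"]) auto
  next
    case 3
    have "(\<lambda>x' y'. d2 x y x' y' - - (d2 H E x' y' :: 'k)) = rEH" using 3 by (simp add: fun_eq_iff rEH_def)
    then show ?thesis using rEH_R2 by (intro exI[of _ "\<lambda>x' y'. - d2 H E x' y'"]) (auto simp: d2_def NP_def)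
  next
    case 4
    have "(\<lambda>x' y'. d2 x y x' y' - - (d2 H F x' y' :: 'k)) = rFH" using 4 by (simp add: fun_eq_iff rFH_def add.commute)
    then show ?thesis using rFH_R2 by (intro exI[of _ "\<lambda>x' y'. - d2 H F x' y'"]) (auto simp: d2_def NP_def)
  next
    case 5
    have "(\<lambda>x' y'. d2 x y x' y' - (d2 E F x' y' + d2 F E x' y' :: 'k)) = rHH" using 5 by (simp add: fun_eq_iff rHH_def)
    then show ?thesis using rHH_R2 by (intro exI[of _ "\<lambda>x' y'. d2 E F x' y' + d2 F E x' y'"]) (auto simp: d2_def NP_def)
  qed
qed

definition nsupp :: "'b list \<Rightarrow> ((sl2b \<times> 'b) list \<Rightarrow> 'k::comm_ring_1) \<Rightarrow> bool" where
  "nsupp \<beta> N \<longleftrightarrow> finsupp N \<and> (\<forall>v. N v \<noteq> 0 \<longrightarrow> normal (map fst v) \<and> map snd v = \<beta>)"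

definition red :: "(sl2b \<times> 'b) list \<Rightarrow> 'k::field_char_0 itself \<Rightarrow> bool" where
  "red w T \<longleftrightarrow> (\<exists>N :: _ \<Rightarrow> 'k. nsupp (map snd w) N \<and> (\<lambda>v. dl w v - N v) \<in> I)"

lemma nsupp_zero: "nsupp \<beta> (\<lambda>v. 0)" by (simp add: nsupp_def)
lemma nsupp_add: assumes "nsupp \<beta> N1" "nsupp \<beta> N2" shows "nsupp \<beta> (\<lambda>v. N1 v + N2 v)"
proof -
  have f: "finsupp (\<lambda>v. N1 v + N2 v)" using assms by (auto simp: nsupp_def intro: finsupp_add)
  have "\<forall>v. N1 v + N2 v \<noteq> 0 \<longrightarrow> normal (map fst v) \<and> map snd v = \<beta>"
  proof (intro allI impI)
  fix v assume "N1 v + N2 v \<noteq> 0"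
  then have "N1 v \<noteq> 0 \<or> N2 v \<noteq> 0" by auto
  then show "normal (map fst v) \<and> map snd v = \<beta>" using assms unfolding nsupp_def by blast
  qed
  then show ?thesis using f unfolding nsupp_def by blast
qed
lemma nsupp_smult: assumes "nsupp \<beta> N" shows "nsupp \<beta> (\<lambda>v. c * N v)"
proof -
  have f: "finsupp (\<lambda>v. c * N v)" using assms by (auto simp: nsupp_def intro: finsupp_smult)
  have "\<forall>v. c * N v \<noteq> 0 \<longrightarrow> normal (map fst v) \<and> map snd v = \<beta>"
  proof (intro allI impI)
    fix v assume "c * N v \<noteq> 0"
    then have "N v \<noteq> 0" by auto
    then show "normal (map fst v) \<and> map snd v = \<beta>" using assms unfolding nsupp_def by blast
  qed
  then show ?thesis using f unfolding nsupp_def by blast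
qed

lemma tmul_diff_r: "tmul h (\<lambda>w. f w - g w) = (\<lambda>w. tmul h f w - tmul h g w)"
  by (rule ext) (simp add: tmul_def right_diff_distrib sum_subtractf)
lemma tmul_diff_l: "tmul (\<lambda>w. f w - g w) h = (\<lambda>w. tmul f h w - tmul g h w)"
  by (rule ext) (simp add: tmul_def left_diff_distrib sum_subtractf)
lemma emb2_diff: "emb2 b1 b2 (\<lambda>x y. g1 x y - g2 x y) = (\<lambda>w. emb2 b1 b2 g1 w - emb2 b1 b2 g2 w)"
  by (simp add: fun_eq_iff emb2_def)
lemma emb3_diff: "emb3 b1 b2 b3 (\<lambda>x y z. g1 x y z - g2 x y z) = (\<lambda>w. emb3 b1 b2 b3 g1 w - emb3 b1 b2 b3 g2 w)"
  by (simp add: fun_eq_iff emb3_def)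

lemma dl_emb2: "dl [(x, b1), (y, b2)] = emb2 b1 b2 (d2 x y)"
proof (rule ext)
  fix w show "dl [(x, b1), (y, b2)] w = emb2 b1 b2 (d2 x y) w"
  proof (cases "map snd w = [b1, b2]")
    case True
    then obtain x' y' where "w = [(x', b1), (y', b2)]" using map_snd_2[OF True] by blast
    then show ?thesis by (simp add: dl_def emb2_def d2_def)
  next
    case False
    then show ?thesis by (auto simp: dl_def emb2_def)
  qed
qed

lemma dl_emb3: "dl [(x, b1), (y, b2), (z, b3)] = emb3 b1 b2 b3 (d3 x y z)"
proof (rule ext)
  fix w show "dl [(x, b1), (y, b2), (z, b3)] w = emb3 b1 b2 b3 (d3 x y z) w"
  proof (cases "map snd w = [b1, b2, b3]")
    case True
    then obtain x' y' z' where "w = [(x', b1), (y', b2), (z', b3)]" using map_snd_3[OF True] by blast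
    then show ?thesis by (simp add: dl_def emb3_def d3_def)
  next
    case False
    then show ?thesis by (auto simp: dl_def emb3_def)
  qed
qed

lemma red_short: assumes "length w \<le> 1" shows "red w TYPE('k::field_char_0)"
  unfolding red_def
proof (intro exI conjI)
  from assms show "nsupp (map snd w) (dl w :: _ \<Rightarrow> 'k)"
    unfolding nsupp_def by (auto simp: dl_def normal_def split: if_splits)
  show "(\<lambda>v. dl w v - (dl w v :: 'k)) \<in> I" using ideal_gen.zero by simp
qed

lemma red_2: "red [(x, b1), (y, b2)] TYPE('k::field_char_0)"
proof -
  obtain g :: "_ \<Rightarrow> _ \<Rightarrow> 'k" where g: "\<forall>x y. g x y \<noteq> 0 \<longrightarrow> [x, y] \<in> NP"
    "(\<lambda>x' y'. d2 x y x' y' - g x' y') \<in> R2 b1 b2"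
    using red2[of x y b1 b2] by (elim exE conjE) blast
  have "\<forall>v. emb2 b1 b2 g v \<noteq> 0 \<longrightarrow> normal (map fst v) \<and> map snd v = [b1, b2]"
  proof (intro allI impI)
    fix v assume v: "emb2 b1 b2 g v \<noteq> 0"
    then have m: "map snd v = [b1, b2]" by (simp add: emb2_def split: if_splits)
    then obtain x' y' where vv: "v = [(x', b1), (y', b2)]" using map_snd_2[OF m] by blast
    then have "[x', y'] \<in> NP" using v g(1) by (simp add: emb2_def)
    then have "normal (map fst v)" unfolding normal_def using vv by (intro disjI2 exI[of _ "[x', y']"] exI[of _ 0]) simp
    then show "normal (map fst v) \<and> map snd v = [b1, b2]" using m by simp
  qed
  then have "nsupp [b1, b2] (emb2 b1 b2 g)" unfolding nsupp_def using finsupp_emb2[of b1 b2 g] by (intro conjI)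
  moreover have "(\<lambda>v. dl [(x, b1), (y, b2)] v - emb2 b1 b2 g v) \<in> I"
    using g(2) unfolding R2_def by (simp add: dl_emb2 emb2_diff)
  ultimately show ?thesis unfolding red_def by (intro exI[of _ "emb2 b1 b2 g"] conjI) simp_all
qed


(* ---- Fin.thy ---- *)


lemma core3:
  assumes "normal (map fst u)" "2 \<le> length u"
  shows "\<exists>N :: _ \<Rightarrow> 'k::field_char_0. nsupp (b # map snd u) N \<and> (\<lambda>v. dl ((x, b) # u) v - N v) \<in> I"
proof -
  obtain p k where p: "p \<in> NP" "map fst u = p @ replicate k H"
    using assms unfolding normal_def by auto
  then obtain y z where yz: "p = [y, z]" by (auto simp: NP_def)
  have "\<exists>a1 a2 u2. u = a1 # a2 # u2" using assms(2) by (cases u; cases "tl u") auto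
  then obtain a1 a2 u2 where u0: "u = a1 # a2 # u2" by blast
  have f: "fst a1 = y" "fst a2 = z" "map fst u2 = replicate k H" using p(2) yz u0 by auto
  define c1 where "c1 = snd a1"
  define c2 where "c2 = snd a2"
  have u: "u = (y, c1) # (z, c2) # u2" using u0 f c1_def c2_def by (metis prod.collapse)
  obtain G :: "_ \<Rightarrow> _ \<Rightarrow> _ \<Rightarrow> 'k" where G: "\<forall>x y z. G x y z \<noteq> 0 \<longrightarrow> [x, y] \<in> NP \<and> z = H"
    "(\<lambda>x' y' z'. d3 x y z x' y' z' - G x' y' z') \<in> R3 b c1 c2"
    using red3[OF p(1)[unfolded yz], of x b c1 c2] by (elim exE conjE) blast
  define N where "N = tmul (emb3 b c1 c2 G) (dl u2)"
  have dl: "dl ((x, b) # u) = tmul (emb3 b c1 c2 (d3 x y z)) (dl u2)"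
    by (simp add: u dl_emb3[symmetric] tmul_dl_dl)
  have "(\<lambda>v. dl ((x, b) # u) v - N v) = tmul (emb3 b c1 c2 (\<lambda>x' y' z'. d3 x y z x' y' z' - G x' y' z')) (dl u2)"
    by (simp add: dl N_def emb3_diff tmul_diff_l)
  moreover have "\<dots> \<in> I" using G(2) unfolding R3_def by (intro ideal_rmul) simp_all
  ultimately have diff: "(\<lambda>v. dl ((x, b) # u) v - N v) \<in> I" by simp
  have "\<forall>v. N v \<noteq> 0 \<longrightarrow> normal (map fst v) \<and> map snd v = b # map snd u"
  proof (intro allI impI)
    fix v assume v: "N v \<noteq> 0"
    let ?t = "take (length v - length u2) v"
    have d: "drop (length v - length u2) v = u2" and e: "emb3 b c1 c2 G ?t \<noteq> 0"
      using v by (simp_all add: N_def tmul_dl_r split: if_splits)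
    from e have m: "map snd ?t = [b, c1, c2]" by (simp add: emb3_def split: if_splits)
    then obtain x' y' z' where t: "?t = [(x', b), (y', c1), (z', c2)]" using map_snd_3[OF m] by blast
    then have "G x' y' z' \<noteq> 0" using e by (simp add: emb3_def)
    then have g: "[x', y'] \<in> NP" "z' = H" using G(1) by auto
    have vv: "v = [(x', b), (y', c1), (z', c2)] @ u2" using t d by (metis append_take_drop_id)
    have "map fst v = [x', y'] @ replicate (Suc k) H" using vv f g by simp
    then have "normal (map fst v)" unfolding normal_def using g by blast
    moreover have "map snd v = b # map snd u" using vv u by simp
    ultimately show "normal (map fst v) \<and> map snd v = b # map snd u" by simp
  qed
  moreover have "finsupp N" unfolding N_def by (intro finsupp_tmul finsupp_emb3 finsupp_dl)
  ultimately have "nsupp (b # map snd u) N" unfolding nsupp_def by (intro conjI)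
  then show ?thesis using diff by blast
qed

lemma red_step:
  assumes len: "2 \<le> length w'" and r: "red w' TYPE('k::field_char_0)"
  shows "red ((x, b) # w') TYPE('k)"
proof -
  obtain N' :: "_ \<Rightarrow> 'k" where N': "nsupp (map snd w') N'" "(\<lambda>v. dl w' v - N' v) \<in> I"
    using r unfolding red_def by blast
  define J where "J = {f :: _ \<Rightarrow> 'k. \<exists>N. nsupp (b # map snd w') N \<and> (\<lambda>v. tmul (dl [(x, b)]) f v - N v) \<in> I}"
  have "N' \<in> J"
  proof (rule span_dl[where P="\<lambda>v. normal (map fst v) \<and> map snd v = map snd w'"])
    show "(\<lambda>w. 0) \<in> J" unfolding J_def
      by (intro CollectI exI[of _ "\<lambda>v. 0"] conjI nsupp_zero) (simp add: tmul_zero_r ideal_gen.zero)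
  next
    fix f g assume "f \<in> J" "g \<in> J"
    then obtain N1 N2 where N: "nsupp (b # map snd w') N1" "(\<lambda>v. tmul (dl [(x, b)]) f v - N1 v) \<in> I"
      "nsupp (b # map snd w') N2" "(\<lambda>v. tmul (dl [(x, b)]) g v - N2 v) \<in> I"
      unfolding J_def by blast
    have "(\<lambda>v. tmul (dl [(x, b)]) (\<lambda>w. f w + g w) v - (N1 v + N2 v)) =
       (\<lambda>v. (tmul (dl [(x, b)]) f v - N1 v) + (tmul (dl [(x, b)]) g v - N2 v))"
      by (simp add: tmul_add_r fun_eq_iff algebra_simps)
    then have "(\<lambda>v. tmul (dl [(x, b)]) (\<lambda>w. f w + g w) v - (N1 v + N2 v)) \<in> I"
      using ideal_gen.add[OF N(2) N(4)] by simp
    then show "(\<lambda>w. f w + g w) \<in> J" unfolding J_def using nsupp_add[OF N(1) N(3)] by blast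
  next
    fix c :: 'k and u assume u: "normal (map fst u) \<and> map snd u = map snd w'"
    then have "2 \<le> length u" using len by (metis length_map)
    then obtain Nu :: "_ \<Rightarrow> 'k" where Nu: "nsupp (b # map snd u) Nu" "(\<lambda>v. dl ((x, b) # u) v - Nu v) \<in> I"
      using core3[of u] u by blast
    have "tmul (dl [(x, b)]) (\<lambda>w. c * dl u w) = (\<lambda>w. c * dl ((x, b) # u) w)"
      by (simp add: tmul_smult_r tmul_dl_dl)
    then have eq: "(\<lambda>v. tmul (dl [(x, b)]) (\<lambda>w. c * dl u w) v - c * Nu v) = (\<lambda>v. c * (dl ((x, b) # u) v - Nu v))"
      by (simp add: right_diff_distrib)
    have mem: "(\<lambda>v. c * (dl ((x, b) # u) v - Nu v)) \<in> I" using ideal_smult[OF Nu(2)] by simp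
    have mem2: "(\<lambda>v. tmul (dl [(x, b)]) (\<lambda>w. c * dl u w) v - c * Nu v) \<in> I" unfolding eq by (rule mem)
    have ns: "nsupp (b # map snd w') (\<lambda>v. c * Nu v)" using nsupp_smult[OF Nu(1)] u by simp
    show "(\<lambda>w. c * dl u w) \<in> J" unfolding J_def using mem2 ns by blast
  next
    show "finsupp N'" using N'(1) by (simp add: nsupp_def)
  next
    fix w assume "N' w \<noteq> 0"
    then show "normal (map fst w) \<and> map snd w = map snd w'" using N'(1) by (simp add: nsupp_def)
  qed
  then obtain N where N: "nsupp (b # map snd w') N" "(\<lambda>v. tmul (dl [(x, b)]) N' v - N v) \<in> I"
    unfolding J_def by blast
  have "tmul (dl [(x, b)]) (\<lambda>v. dl w' v - N' v) \<in> I" by (rule ideal_lmul[OF N'(2) finsupp_dl])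
  then have "(\<lambda>v. dl ((x, b) # w') v - tmul (dl [(x, b)]) N' v) \<in> I"
    by (simp add: tmul_diff_r tmul_dl_dl)
  from ideal_gen.add[OF this N(2)] have "(\<lambda>v. dl ((x, b) # w') v - N v) \<in> I" by simp
  then show ?thesis unfolding red_def using N(1) by auto
qed

lemma red_all: "red w TYPE('k::field_char_0)"
proof (induction w)
  case Nil then show ?case by (rule red_short) simp
next
  case (Cons l w')
  obtain x b where l: "l = (x, b)" by (cases l)
  consider "length w' = 0" | "length w' = 1" | "2 \<le> length w'" by linarith
  then show ?case
  proof cases
    case 1 then show ?thesis by (intro red_short) simp
  next
    case 2
    then obtain y c where "w' = [(y, c)]" by (auto simp: length_Suc_conv)
    then show ?thesis using l red_2 by simp
  next
    case 3 then show ?thesis using l red_step Cons.IH by simp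
  qed
qed

lemma Phi_diff: "Phi (\<lambda>w. x w - y w) \<beta> = Phi x \<beta> - Phi y \<beta>"
  by (simp add: Phi_alt sum_subtractf[symmetric] vec_eq_iff left_diff_distrib)

lemma kernel_ideal:
  assumes f: "finsupp (\<phi> :: _ \<Rightarrow> 'k::field_char_0)" and z: "Phi \<phi> = (\<lambda>_. 0)"
  shows "\<phi> \<in> I"
proof -
  define J where "J = {f :: (sl2b \<times> 'a) list \<Rightarrow> 'k. \<exists>N. finsupp N \<and> (\<forall>v. N v \<noteq> 0 \<longrightarrow> normal (map fst v)) \<and> (\<lambda>v. f v - N v) \<in> I}"
  have "\<phi> \<in> J"
  proof (rule span_dl[where P="\<lambda>v. True"])
    show "(\<lambda>w. 0) \<in> J" unfolding J_def
      by (intro CollectI exI[of _ "\<lambda>v. 0"] conjI) (simp_all add: ideal_gen.zero)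
  next
    fix f g assume "f \<in> J" "g \<in> J"
    then obtain N1 N2 where N: "finsupp N1" "\<forall>v. N1 v \<noteq> 0 \<longrightarrow> normal (map fst v)" "(\<lambda>v. f v - N1 v) \<in> I"
      "finsupp N2" "\<forall>v. N2 v \<noteq> 0 \<longrightarrow> normal (map fst v)" "(\<lambda>v. g v - N2 v) \<in> I"
      unfolding J_def by blast
    have "(\<lambda>v. (f v + g v) - (N1 v + N2 v)) \<in> I"
      using ideal_gen.add[OF N(3) N(6)] by (simp add: algebra_simps)
    moreover have "\<forall>v. N1 v + N2 v \<noteq> 0 \<longrightarrow> normal (map fst v)"
    proof (intro allI impI)
      fix v assume "N1 v + N2 v \<noteq> 0"
      then have "N1 v \<noteq> 0 \<or> N2 v \<noteq> 0" by auto
      then show "normal (map fst v)" using N(2,5) by blast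
    qed
    ultimately show "(\<lambda>w. f w + g w) \<in> J" unfolding J_def using finsupp_add[OF N(1) N(4)] by blast
  next
    fix c :: 'k and u :: "(sl2b \<times> 'a) list"
    obtain Nu :: "_ \<Rightarrow> 'k" where Nu: "nsupp (map snd u) Nu" "(\<lambda>v. dl u v - Nu v) \<in> I"
      using red_all[of u] unfolding red_def by blast
    have "(\<lambda>v. c * dl u v - c * Nu v) \<in> I" using ideal_smult[OF Nu(2), of c] by (simp add: right_diff_distrib)
    moreover have "finsupp (\<lambda>v. c * Nu v)" using Nu(1) by (simp add: nsupp_def finsupp_smult)
    moreover have "\<forall>v. c * Nu v \<noteq> 0 \<longrightarrow> normal (map fst v)" using Nu(1) by (simp add: nsupp_def)
    ultimately show "(\<lambda>w. c * dl u w) \<in> J" unfolding J_def by blast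
  qed (use f in auto)
  then obtain N where N: "finsupp N" "\<forall>v. N v \<noteq> 0 \<longrightarrow> normal (map fst v)" "(\<lambda>v. \<phi> v - N v) \<in> I"
    unfolding J_def by blast
  have PhiN: "Phi N \<beta> = 0" for \<beta>
  proof -
    have "Phi (\<lambda>v. \<phi> v - (\<phi> v - N v)) \<beta> = Phi \<phi> \<beta> - Phi (\<lambda>v. \<phi> v - N v) \<beta>" by (rule Phi_diff)
    also have "\<dots> = 0" using z ideal_Phi_zero[OF N(3)] by (simp add: fun_eq_iff)
    finally show ?thesis by simp
  qed
  have "N v = 0" for v
    by (rule normal_inj[where \<phi> = N]) (use N(2) PhiN in auto)
  then have "\<phi> = (\<lambda>v. \<phi> v - N v)" by simp
  then show ?thesis using N(3) by simp
qed


theorem proposition4p2: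
  fixes \<Phi> :: "((sl2b \<times> 'b) list \<Rightarrow> 'k::field_char_0) \<Rightarrow> 'b list \<Rightarrow> 'k^2^2"
  defines "\<Phi> \<equiv> Phi"
  shows "(\<forall>\<phi> \<psi>. finsupp \<phi> \<longrightarrow> finsupp \<psi> \<longrightarrow> \<Phi> (tmul \<phi> \<psi>) = mmul (\<Phi> \<phi>) (\<Phi> \<psi>))
    \<and> \<Phi> tone = mone
    \<and> (\<forall>X \<phi>. finsupp \<phi> \<longrightarrow> \<Phi> (act X \<phi>) = (\<lambda>\<beta>. bracket X (\<Phi> \<phi> \<beta>)))
    \<and> \<Phi> ` {\<phi>. finsupp \<phi>} = TKK_alg
    \<and> (\<forall>\<phi>. finsupp \<phi> \<longrightarrow> (\<Phi> \<phi> = (\<lambda>_. 0) \<longleftrightarrow> \<phi> \<in> ideal_gen bad_components))"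
  unfolding \<Phi>_def
proof (intro conjI allI impI)
  fix \<phi> \<psi> :: "(sl2b \<times> 'b) list \<Rightarrow> 'k"
  show "Phi (tmul \<phi> \<psi>) = mmul (Phi \<phi>) (Phi \<psi>)" by (rule Phi_tmul_fun)
next
  show "Phi tone = (mone :: 'b list \<Rightarrow> 'k^2^2)" by (rule Phi_tone)
next
  fix X and \<phi> :: "(sl2b \<times> 'b) list \<Rightarrow> 'k"
  show "Phi (act X \<phi>) = (\<lambda>\<beta>. bracket X (Phi \<phi> \<beta>))" by (rule ext) (rule Phi_act)
next
  show "Phi ` {\<phi> :: (sl2b \<times> 'b) list \<Rightarrow> 'k. finsupp \<phi>} = TKK_alg" by (rule image_Phi)
next
  fix \<phi> :: "(sl2b \<times> 'b) list \<Rightarrow> 'k"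
  assume f: "finsupp \<phi>"
  show "Phi \<phi> = (\<lambda>_. 0) \<longleftrightarrow> \<phi> \<in> ideal_gen bad_components"
    using kernel_ideal[OF f] ideal_Phi_zero[of \<phi>] by blast
qed

end
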